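(* Let $f \in K^{\times}\setminus k$ satisfy $f'=af$ for some $a\in k$, and let $g\in K$ satisfy a nonzero homogeneous linear differential equation with coefficients in $k$. Then $f$ and $g$ are algebraically dependent over $k$ if and only if there exist an element $\theta$ in an algebraic extension of $K$ and an integer $n$ such that $$f=\theta^{n}\quad\text{and}\quad g\in k[\theta,\theta^{-1}].$$
   Context: $K$ is a differential field of characteristic zero (derivation $y\mapsto y'$), $k\subset K$ is an algebraically closed differential subfield, and $K$ and $k$ have the same field of constants $C=\{y\in K: y'=0\}$. *)

theory Defs
  imports "HOL-Computational_Algebra.Polynomial"
begin

text \<open>Ambient setting: all fields live inside one field type 'a (later taken to be
algebraically closed), and are given as carrier subsets.\<close>

definition is_subfield :: "'a::field set \<Rightarrow> bool" where
  "is_subfield S \<longleftrightarrow> 0 \<in> S \<and> 1 \<in> S \<and>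
     (\<forall>x\<in>S. \<forall>y\<in>S. x + y \<in> S \<and> x * y \<in> S) \<and>
     (\<forall>x\<in>S. - x \<in> S) \<and> (\<forall>x\<in>S. x \<noteq> 0 \<longrightarrow> inverse x \<in> S)"

text \<open>D is a derivation on the field K (values outside K are irrelevant).\<close>
definition is_derivation :: "'a::field set \<Rightarrow> ('a \<Rightarrow> 'a) \<Rightarrow> bool" where
  "is_derivation K D \<longleftrightarrow> (\<forall>x\<in>K. D x \<in> K) \<and>
     (\<forall>x\<in>K. \<forall>y\<in>K. D (x + y) = D x + D y \<and> D (x * y) = x * D y + D x * y)"

definition differential_field :: "'a::field set \<Rightarrow> ('a \<Rightarrow> 'a) \<Rightarrow> bool" where
  "differential_field K D \<longleftrightarrow> is_subfield K \<and> is_derivation K D"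

definition differential_subfield :: "'a::field set \<Rightarrow> 'a set \<Rightarrow> ('a \<Rightarrow> 'a) \<Rightarrow> bool" where
  "differential_subfield k K D \<longleftrightarrow> is_subfield k \<and> k \<subseteq> K \<and> (\<forall>x\<in>k. D x \<in> k)"

definition constants :: "'a::field set \<Rightarrow> ('a \<Rightarrow> 'a) \<Rightarrow> 'a set" where
  "constants K D = {y \<in> K. D y = 0}"

definition alg_closed_subfield :: "'a::field set \<Rightarrow> bool" where
  "alg_closed_subfield k \<longleftrightarrow>
     (\<forall>p. (\<forall>i. coeff p i \<in> k) \<longrightarrow> degree p > 0 \<longrightarrow> (\<exists>x\<in>k. poly p x = 0))"

definition algebraic_over :: "'a::field set \<Rightarrow> 'a \<Rightarrow> bool" where
  "algebraic_over K x \<longleftrightarrow> (\<exists>p. p \<noteq> 0 \<and> (\<forall>i. coeff p i \<in> K) \<and> poly p x = 0)"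

definition satisfies_nonzero_hlde :: "'a::field set \<Rightarrow> ('a \<Rightarrow> 'a) \<Rightarrow> 'a \<Rightarrow> bool" where
  "satisfies_nonzero_hlde k D g \<longleftrightarrow>
     (\<exists>n c. (\<forall>i\<le>n. c i \<in> k) \<and> (\<exists>i\<le>n. c i \<noteq> 0) \<and>
            (\<Sum>i\<le>n. c i * (D ^^ i) g) = 0)"

definition alg_dependent2 :: "'a::field set \<Rightarrow> 'a \<Rightarrow> 'a \<Rightarrow> bool" where
  "alg_dependent2 k f g \<longleftrightarrow>
     (\<exists>N c. (\<forall>i\<le>N. \<forall>j\<le>N. c i j \<in> k) \<and> (\<exists>i\<le>N. \<exists>j\<le>N. c i j \<noteq> 0) \<and>
            (\<Sum>i\<le>N. \<Sum>j\<le>N. c i j * f ^ i * g ^ j) = 0)"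

definition in_laurent :: "'a::field set \<Rightarrow> 'a \<Rightarrow> 'a \<Rightarrow> bool" where
  "in_laurent k \<theta> g \<longleftrightarrow>
     (\<exists>N::nat. \<exists>c::int \<Rightarrow> 'a. (\<forall>i\<in>{-int N..int N}. c i \<in> k) \<and>
        g = (\<Sum>i\<in>{-int N..int N}. c i * \<theta> powi i))"

end

theory Submission
  imports Defs
begin

definition sub_ring :: "'b::comm_ring_1 set \<Rightarrow> bool" where
 "sub_ring S \<longleftrightarrow> 0 \<in> S \<and> 1 \<in> S \<and> (\<forall>x\<in>S. \<forall>y\<in>S. x+y \<in> S \<and> x*y \<in> S) \<and> (\<forall>x\<in>S. -x \<in> S)"

lemma sub_ringD:
  assumes "sub_ring S"
  shows "0\<in>S" "1\<in>S" "x\<in>S \<Longrightarrow> y\<in>S \<Longrightarrow> x+y\<in>S" "x\<in>S \<Longrightarrow> y\<in>S \<Longrightarrow> x*y\<in>S"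
    "x\<in>S \<Longrightarrow> -x\<in>S" "x\<in>S \<Longrightarrow> y\<in>S \<Longrightarrow> x-y\<in>S"
  using assms unfolding sub_ring_def by (auto, metis diff_conv_add_uminus)

lemma sub_ring_sum: assumes "sub_ring S" shows "(\<And>i. i\<in>A \<Longrightarrow> f i \<in> S) \<Longrightarrow> sum f A \<in> S"
  by (induction A rule: infinite_finite_induct) (simp_all add: sub_ringD[OF assms])

lemma sub_ring_prod: assumes "sub_ring S" shows "(\<And>i. i\<in>A \<Longrightarrow> f i \<in> S) \<Longrightarrow> prod f A \<in> S"
  by (induction A rule: infinite_finite_induct) (simp_all add: sub_ringD[OF assms])

lemma sub_ring_power: assumes "sub_ring S" shows "x \<in> S \<Longrightarrow> x ^ n \<in> S"
  by (induction n) (simp_all add: sub_ringD[OF assms])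

lemma sub_ring_of_nat: assumes "sub_ring S" shows "of_nat n \<in> S"
  by (induction n) (simp_all add: sub_ringD[OF assms])

lemma sub_ring_of_int: assumes "sub_ring S" shows "of_int n \<in> S"
  by (cases n) (simp_all add: sub_ringD[OF assms] sub_ring_of_nat[OF assms])

lemma subfield_sub_ring: "is_subfield S \<Longrightarrow> sub_ring S"
  unfolding is_subfield_def sub_ring_def by auto

lemma subfield_inverse: "is_subfield S \<Longrightarrow> x \<in> S \<Longrightarrow> inverse x \<in> S"
  unfolding is_subfield_def by (cases "x = 0") auto

lemma subfield_divide: "is_subfield S \<Longrightarrow> x \<in> S \<Longrightarrow> y \<in> S \<Longrightarrow> x / y \<in> S"
  unfolding divide_inverse by (rule sub_ringD(4)[OF subfield_sub_ring]) (auto intro: subfield_inverse)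

definition cpoly :: "'b::zero set \<Rightarrow> 'b poly set" where
  "cpoly S = {p. \<forall>i. coeff p i \<in> S}"

lemma cpolyI: "(\<And>i. coeff p i \<in> S) \<Longrightarrow> p \<in> cpoly S"
  by (simp add: cpoly_def)

lemma cpolyD: "p \<in> cpoly S \<Longrightarrow> coeff p i \<in> S"
  by (simp add: cpoly_def)

lemma sub_ring_cpoly:
  assumes S: "sub_ring S" shows "sub_ring (cpoly S)"
  unfolding sub_ring_def
proof (intro conjI ballI)
  show "0 \<in> cpoly S" using sub_ringD[OF S] by (simp add: cpoly_def)
  show "1 \<in> cpoly S" using sub_ringD[OF S] by (simp add: cpoly_def coeff_1)
  fix x y assume x: "x \<in> cpoly S" and y: "y \<in> cpoly S"
  show "x + y \<in> cpoly S" using x y sub_ringD(3)[OF S] by (simp add: cpoly_def)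
  show "x * y \<in> cpoly S" using x y sub_ringD(4)[OF S]
    by (simp add: cpoly_def coeff_mult sub_ring_sum[OF S])
next
  fix x assume x: "x \<in> cpoly S"
  show "- x \<in> cpoly S" using x sub_ringD(5)[OF S] by (simp add: cpoly_def)
qed

lemma cpoly_pCons: "0 \<in> S \<Longrightarrow> pCons c p \<in> cpoly S \<longleftrightarrow> c \<in> S \<and> p \<in> cpoly S"
  unfolding cpoly_def
  apply (auto simp: coeff_pCons split: nat.splits)
  done

lemma cpoly_const: "0 \<in> S \<Longrightarrow> c \<in> S \<Longrightarrow> [:c:] \<in> cpoly S"
  by (simp add: cpoly_def coeff_pCons split: nat.splits)

lemma cpoly_monom: "0 \<in> S \<Longrightarrow> c \<in> S \<Longrightarrow> monom c n \<in> cpoly S"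
  by (simp add: cpoly_def coeff_monom)

lemma cpoly_smult: "sub_ring S \<Longrightarrow> c \<in> S \<Longrightarrow> p \<in> cpoly S \<Longrightarrow> smult c p \<in> cpoly S"
  by (simp add: cpoly_def sub_ringD(4))

lemma cpoly_pderiv: "sub_ring S \<Longrightarrow> p \<in> cpoly S \<Longrightarrow> pderiv (p::'b::{comm_ring_1,semiring_no_zero_divisors} poly) \<in> cpoly S"
  by (auto simp: cpoly_def coeff_pderiv simp del: of_nat_Suc intro!: sub_ringD(4) sub_ring_of_nat)

lemma cpoly_map: "0 \<in> T \<Longrightarrow> h 0 = 0 \<Longrightarrow> (\<And>x. x \<in> S \<Longrightarrow> h x \<in> T) \<Longrightarrow> p \<in> cpoly S \<Longrightarrow> map_poly h p \<in> cpoly T"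
  by (simp add: cpoly_def coeff_map_poly)

lemma cpoly_mono: "S \<subseteq> T \<Longrightarrow> p \<in> cpoly S \<Longrightarrow> p \<in> cpoly T"
  by (auto simp: cpoly_def)

lemma poly_in_sub_ring:
  assumes S: "sub_ring S" and T: "T \<subseteq> S" and p: "p \<in> cpoly T" and x: "x \<in> S"
  shows "poly p x \<in> S"
  using p
proof (induction p)
  case (pCons a p)
  have "0 \<in> T" using cpolyD[OF pCons.prems, of "Suc (Suc (degree p))"] by (simp add: coeff_eq_0)
  then have "a \<in> T" "p \<in> cpoly T" using pCons.prems cpoly_pCons by blast+
  then show ?case using pCons.IH T x sub_ringD[OF S] by auto
qed (simp add: sub_ringD[OF S])

definition is_der :: "'b::comm_ring_1 set \<Rightarrow> ('b \<Rightarrow> 'b) \<Rightarrow> bool" where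
  "is_der S d \<longleftrightarrow> (\<forall>x\<in>S. \<forall>y\<in>S. d (x + y) = d x + d y \<and> d (x * y) = x * d y + d x * y)"

lemma is_derD:
  assumes "is_der S d" "x \<in> S" "y \<in> S"
  shows "d (x + y) = d x + d y" "d (x * y) = x * d y + d x * y"
  using assms unfolding is_der_def by auto

lemma derivation_is_der: "is_derivation K D \<Longrightarrow> is_der K D"
  unfolding is_derivation_def is_der_def by auto

context
  fixes S :: "'b::idom set" and d
  assumes S: "sub_ring S" and d: "is_der S d"
begin

lemma der_zero: "d 0 = 0"
proof -
  have "d (0 + 0) = d 0 + d 0" using is_derD(1)[OF d sub_ringD(1)[OF S] sub_ringD(1)[OF S]] .
  then show ?thesis by (metis add_cancel_right_right add_0)
qed

lemma der_one: "d 1 = 0"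
proof -
  have "d (1 * 1) = 1 * d 1 + d 1 * 1" using is_derD(2)[OF d sub_ringD(2)[OF S] sub_ringD(2)[OF S]] .
  then show ?thesis by (metis add_cancel_right_right mult_1 mult_1_right)
qed

lemma der_minus: "x \<in> S \<Longrightarrow> d (- x) = - d x"
  using is_derD(1)[OF d, of x "-x"] sub_ringD(5)[OF S, of x] der_zero
  by (simp add: eq_neg_iff_add_eq_0 add.commute)

lemma der_diff: "x \<in> S \<Longrightarrow> y \<in> S \<Longrightarrow> d (x - y) = d x - d y"
  using is_derD(1)[OF d, of x "-y"] sub_ringD(5)[OF S, of y] der_minus[of y] by simp

lemma der_sum: "(\<And>i. i \<in> A \<Longrightarrow> f i \<in> S) \<Longrightarrow> d (sum f A) = (\<Sum>i\<in>A. d (f i))"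
proof (induction A rule: infinite_finite_induct)
  case (insert x F)
  have "sum f F \<in> S" using insert.prems by (intro sub_ring_sum[OF S]) auto
  then show ?case using insert is_derD(1)[OF d, of "f x" "sum f F"] by simp
qed (simp_all add: der_zero)

lemma der_power: "x \<in> S \<Longrightarrow> d (x ^ Suc n) = of_nat (Suc n) * x ^ n * d x"
proof (induction n)
  case (Suc n)
  have "d (x ^ Suc (Suc n)) = d (x * x ^ Suc n)" by simp
  also have "\<dots> = x * d (x ^ Suc n) + d x * x ^ Suc n"
    by (rule is_derD(2)[OF d Suc.prems sub_ring_power[OF S Suc.prems]])
  also have "\<dots> = of_nat (Suc (Suc n)) * x ^ Suc n * d x"
    using Suc by (simp add: algebra_simps)
  finally show ?case .
qed simp

lemma der_power': "x \<in> S \<Longrightarrow> d (x ^ n) = of_nat n * x ^ (n - 1) * d x"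
proof (cases n)
  case (Suc m)
  show "x \<in> S \<Longrightarrow> ?thesis" using der_power[of x m] Suc by simp
qed (simp add: der_one)

lemma chain1:
  assumes T: "T \<subseteq> S" and c: "c \<in> cpoly T" and x: "x \<in> S"
  shows "d (poly c x) = poly (map_poly d c) x + poly (pderiv c) x * d x"
  using c
proof (induction c)
  case 0
  then show ?case by (simp add: der_zero)
next
  case (pCons a p)
  have "0 \<in> T" using cpolyD[OF pCons.prems, of "Suc (Suc (degree p))"] by (simp add: coeff_eq_0)
  then have a: "a \<in> T" and p: "p \<in> cpoly T" using pCons.prems cpoly_pCons by blast+
  have pS: "poly p x \<in> S" by (rule poly_in_sub_ring[OF S T p x])
  have aS: "a \<in> S" using a T by auto
  have "d (poly (pCons a p) x) = d a + (x * d (poly p x) + d x * poly p x)"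
    using is_derD[OF d] pS aS x sub_ringD[OF S] by simp
  also have "\<dots> = poly (map_poly d (pCons a p)) x + poly (pderiv (pCons a p)) x * d x"
    using pCons.IH[OF p] by (simp add: map_poly_pCons der_zero pderiv_pCons algebra_simps)
  finally show ?case .
qed

end

definition ev2 :: "'b::comm_ring_1 poly poly \<Rightarrow> 'b \<Rightarrow> 'b \<Rightarrow> 'b" where
  "ev2 P x y = poly (poly P [:y:]) x"

lemma ev2_pCons[simp]: "ev2 (pCons c P) x y = poly c x + y * ev2 P x y"
  by (simp add: ev2_def)
lemma ev2_0[simp]: "ev2 0 x y = 0" by (simp add: ev2_def)
lemma ev2_1[simp]: "ev2 1 x y = 1" by (simp add: ev2_def)
lemma ev2_add[simp]: "ev2 (P + Q) x y = ev2 P x y + ev2 Q x y" by (simp add: ev2_def)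
lemma ev2_diff[simp]: "ev2 (P - Q) x y = ev2 P x y - ev2 Q x y" by (simp add: ev2_def)
lemma ev2_minus[simp]: "ev2 (- P) x y = - ev2 P x y" by (simp add: ev2_def)
lemma ev2_mult[simp]: "ev2 (P * Q) x y = ev2 P x y * ev2 Q x y" by (simp add: ev2_def)
lemma ev2_smult[simp]: "ev2 (smult c P) x y = poly c x * ev2 P x y" by (simp add: ev2_def)
lemma ev2_const[simp]: "ev2 [:c:] x y = poly c x" by (simp add: ev2_def)
lemma ev2_power[simp]: "ev2 (P ^ n) x y = ev2 P x y ^ n" by (simp add: ev2_def)
lemma ev2_monom[simp]: "ev2 (monom c n) x y = poly c x * y ^ n"
  by (simp add: ev2_def poly_monom)

lemma ev2_in_sub_ring:
  assumes S: "sub_ring S" and T: "T \<subseteq> S" and P: "P \<in> cpoly (cpoly T)" and x: "x \<in> S" and y: "y \<in> S"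
  shows "ev2 P x y \<in> S"
  using P
proof (induction P)
  case (pCons c P)
  have "0 \<in> cpoly T" using cpolyD[OF pCons.prems, of "Suc (Suc (degree P))"] by (simp add: coeff_eq_0)
  then have "c \<in> cpoly T" "P \<in> cpoly (cpoly T)" using pCons.prems cpoly_pCons by blast+
  then show ?case using pCons.IH poly_in_sub_ring[OF S T _ x] y sub_ringD[OF S] by auto
qed (simp add: sub_ringD[OF S])

lemma chain2:
  fixes S :: "'b::idom set"
  assumes S: "sub_ring S" and d: "is_der S d"
    and T: "T \<subseteq> S" and P: "P \<in> cpoly (cpoly T)" and x: "x \<in> S" and y: "y \<in> S"
  shows "d (ev2 P x y) = ev2 (map_poly (map_poly d) P) x y + ev2 (map_poly pderiv P) x y * d x
            + ev2 (pderiv P) x y * d y"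
  using P
proof (induction P)
  case 0
  then show ?case by (simp add: der_zero[OF S d])
next
  case (pCons c P)
  have "0 \<in> cpoly T" using cpolyD[OF pCons.prems, of "Suc (Suc (degree P))"] by (simp add: coeff_eq_0)
  then have c: "c \<in> cpoly T" and P: "P \<in> cpoly (cpoly T)" using pCons.prems cpoly_pCons by blast+
  have PS: "ev2 P x y \<in> S" by (rule ev2_in_sub_ring[OF S T P x y])
  have cS: "poly c x \<in> S" by (rule poly_in_sub_ring[OF S T c x])
  have "d (ev2 (pCons c P) x y) = d (poly c x) + (y * d (ev2 P x y) + d y * ev2 P x y)"
    using is_derD[OF d] PS cS y sub_ringD[OF S] by simp
  also have "\<dots> = ev2 (map_poly (map_poly d) (pCons c P)) x y + ev2 (map_poly pderiv (pCons c P)) x y * d x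
            + ev2 (pderiv (pCons c P)) x y * d y"
    using pCons.IH[OF P] chain1[OF S d T c x]
    by (simp add: map_poly_pCons der_zero[OF S d] pderiv_pCons algebra_simps)
  finally show ?case .
qed

lemma synth_cpoly:
  assumes S: "sub_ring S" and c: "c \<in> S" shows "p \<in> cpoly S \<Longrightarrow> synthetic_div p c \<in> cpoly S"
proof (induction p)
  case (pCons a p)
  have "0 \<in> S" using sub_ringD[OF S] by simp
  then have "p \<in> cpoly S" using pCons.prems cpoly_pCons by blast
  then show ?case using pCons.IH poly_in_sub_ring[OF S _ _ c, of S p] \<open>0 \<in> S\<close> cpoly_pCons by auto
qed simp

lemma root_in_subfield:
  assumes k: "is_subfield k" and kc: "alg_closed_subfield k"
  shows "p \<in> cpoly k \<Longrightarrow> p \<noteq> 0 \<Longrightarrow> poly p z = 0 \<Longrightarrow> z \<in> k"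
proof (induction "degree p" arbitrary: p rule: less_induct)
  case less
  have S: "sub_ring k" using subfield_sub_ring[OF k] .
  show ?case
  proof (cases "degree p = 0")
    case True
    then obtain c where "p = [:c:]" using degree_eq_zeroE by blast
    then show ?thesis using less.prems by simp
  next
    case False
    then obtain l where l: "l \<in> k" "poly p l = 0"
      using kc less.prems(1) unfolding alg_closed_subfield_def cpoly_def by auto
    define q where "q = synthetic_div p l"
    have pq: "p = [:-l, 1:] * q" using synthetic_div_correct'[of l p] l(2) by (simp add: q_def)
    have q: "q \<in> cpoly k" unfolding q_def by (rule synth_cpoly[OF S l(1) less.prems(1)])
    have dq: "degree q < degree p" using False by (simp add: q_def degree_synthetic_div)
    have "q \<noteq> 0" using pq less.prems(2) by auto
    from less.prems(3) have "(z - l) * poly q z = 0" by (simp add: pq algebra_simps)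
    then have "z - l = 0 \<or> poly q z = 0" by simp
    then show ?thesis
    proof
      assume "z - l = 0" then show ?thesis using l by simp
    next
      assume "poly q z = 0"
      then show ?thesis using less.hyps[OF dq q \<open>q \<noteq> 0\<close>] by simp
    qed
  qed
qed

lemma LA:
  fixes M :: "'i \<Rightarrow> 'j \<Rightarrow> 'a::field"
  assumes S: "is_subfield S" and J: "finite J"
  shows "finite I \<Longrightarrow> card J < card I \<Longrightarrow> (\<And>i j. i\<in>I \<Longrightarrow> j\<in>J \<Longrightarrow> M i j \<in> S) \<Longrightarrow>
     \<exists>c. (\<forall>i\<in>I. c i \<in> S) \<and> (\<exists>i\<in>I. c i \<noteq> 0) \<and> (\<forall>j\<in>J. (\<Sum>i\<in>I. c i * M i j) = 0)"
  using J
proof (induction J arbitrary: I M rule: finite_induct)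
  case empty
  then obtain i0 where "i0 \<in> I" by fastforce
  then show ?case using S unfolding is_subfield_def
    by (intro exI[of _ "\<lambda>i. if i = i0 then 1 else 0"]) auto
next
  case (insert j0 J)
  have SR: "sub_ring S" using subfield_sub_ring[OF S] .
  show ?case
  proof (cases "\<forall>i\<in>I. M i j0 = 0")
    case True
    have "card J < card I" using insert by simp
    then obtain c where c: "\<forall>i\<in>I. c i \<in> S" "\<exists>i\<in>I. c i \<noteq> 0" "\<forall>j\<in>J. (\<Sum>i\<in>I. c i * M i j) = 0"
      using insert.IH[OF insert.prems(1)] insert.prems(3) by blast
    then show ?thesis using True by (intro exI[of _ c]) auto
  next
    case False
    then obtain i0 where i0: "i0 \<in> I" "M i0 j0 \<noteq> 0" by blast
    define I' where "I' = I - {i0}"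
    define M' where "M' i j = M i j - M i j0 / M i0 j0 * M i0 j" for i j
    have fI': "finite I'" using insert.prems(1) by (simp add: I'_def)
    have cI': "card J < card I'" using insert.prems(2) insert.hyps i0 insert.prems(1)
      by (simp add: I'_def card_Diff_singleton)
    have M'S: "M' i j \<in> S" if "i \<in> I'" "j \<in> J" for i j
      using that i0 insert.prems(3) unfolding M'_def I'_def
      by (intro sub_ringD(6)[OF SR] sub_ringD(4)[OF SR] subfield_divide[OF S]) auto
    obtain c' where c': "\<forall>i\<in>I'. c' i \<in> S" "\<exists>i\<in>I'. c' i \<noteq> 0" "\<forall>j\<in>J. (\<Sum>i\<in>I'. c' i * M' i j) = 0"
      using insert.IH[where M=M', OF fI' cI' M'S] by blast
    define s where "s = (\<Sum>i\<in>I'. c' i * M i j0)"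
    define c where "c i = (if i = i0 then - s / M i0 j0 else c' i)" for i
    have sumc: "(\<Sum>i\<in>I. c i * M i j) = - s / M i0 j0 * M i0 j + (\<Sum>i\<in>I'. c' i * M i j)" for j
      using i0(1) insert.prems(1) unfolding I'_def c_def
      by (simp add: sum.remove[of I i0])
    have "\<forall>i\<in>I. c i \<in> S"
    proof
      fix i assume "i \<in> I"
      show "c i \<in> S"
      proof (cases "i = i0")
        case True
        have "s \<in> S" unfolding s_def using c'(1) insert.prems(3) by (intro sub_ring_sum[OF SR] sub_ringD(4)[OF SR]) (auto simp: I'_def)
        then show ?thesis using True i0 insert.prems(3) unfolding c_def
          by (simp add: subfield_divide[OF S] sub_ringD(5)[OF SR])
      qed (use c'(1) \<open>i \<in> I\<close> in \<open>auto simp: c_def I'_def\<close>)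
    qed
    moreover have "\<exists>i\<in>I. c i \<noteq> 0" using c'(2) by (auto simp: c_def I'_def)
    moreover have "\<forall>j\<in>insert j0 J. (\<Sum>i\<in>I. c i * M i j) = 0"
    proof
      fix j assume j: "j \<in> insert j0 J"
      show "(\<Sum>i\<in>I. c i * M i j) = 0"
      proof (cases "j = j0")
        case True
        then show ?thesis using sumc[of j0] i0(2) by (simp add: s_def)
      next
        case False
        then have "j \<in> J" using j by simp
        then have "(\<Sum>i\<in>I'. c' i * M' i j) = 0" using c'(3) by blast
        then have "(\<Sum>i\<in>I'. c' i * M i j) - s / M i0 j0 * M i0 j = 0"
          unfolding M'_def s_def by (simp add: algebra_simps sum_subtractf sum_distrib_left sum_divide_distrib sum_distrib_right)
        then show ?thesis using sumc[of j] by simp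
      qed
    qed
    ultimately show ?thesis by blast
  qed
qed

lemma pdiv_exists:
  fixes Q :: "'b::comm_ring_1 poly"
  assumes R: "sub_ring R" and Q: "Q \<in> cpoly R" "Q \<noteq> 0"
  shows "T \<in> cpoly R \<Longrightarrow> \<exists>e S Rm. S \<in> cpoly R \<and> Rm \<in> cpoly R \<and>
      smult (lead_coeff Q ^ e) T = S * Q + Rm \<and> (Rm = 0 \<or> degree Rm < degree Q)"
proof (induction "degree T" arbitrary: T rule: less_induct)
  case less
  have CR: "sub_ring (cpoly R)" by (rule sub_ring_cpoly[OF R])
  show ?case
  proof (cases "T \<noteq> 0 \<and> degree Q \<le> degree T")
    case False
    then show ?thesis using less.prems sub_ringD(1)[OF CR]
      by (intro exI[of _ 0] exI[of _ "0::'b poly"] exI[of _ T]) auto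
  next
    case True
    define m where "m = monom (lead_coeff T) (degree T - degree Q)"
    define T' where "T' = smult (lead_coeff Q) T - m * Q"
    have lcR: "lead_coeff Q \<in> R" "lead_coeff T \<in> R" using Q less.prems by (auto intro: cpolyD)
    have mR: "m \<in> cpoly R" unfolding m_def by (rule cpoly_monom[OF sub_ringD(1)[OF R] lcR(2)])
    have T'R: "T' \<in> cpoly R" unfolding T'_def
      by (intro sub_ringD(6)[OF CR] sub_ringD(4)[OF CR] cpoly_smult[OF R] lcR mR Q less.prems)
    have degm: "degree (m * Q) \<le> degree T"
      using degree_mult_le[of m Q] degree_monom_le[of "lead_coeff T" "degree T - degree Q"] True
      unfolding m_def by linarith
    have dT': "degree T' \<le> degree T" unfolding T'_def
      by (intro degree_diff_le degm) (simp add: degree_smult_le)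
    have cT': "coeff T' (degree T) = 0" unfolding T'_def m_def
      using True by (simp add: coeff_monom_mult)
    show ?thesis
    proof (cases "T' = 0")
      case True
      then show ?thesis using mR lcR sub_ringD(1)[OF CR] unfolding T'_def
        by (intro exI[of _ 1] exI[of _ m] exI[of _ 0]) (simp add: algebra_simps)
    next
      case False
      have "degree T' < degree T" by (rule degree_less_if_less_eqI[OF dT' cT' False])
      then obtain e S Rm where IH: "S \<in> cpoly R" "Rm \<in> cpoly R"
        "smult (lead_coeff Q ^ e) T' = S * Q + Rm" "Rm = 0 \<or> degree Rm < degree Q"
        using less.hyps T'R by blast
      have e1: "smult (lead_coeff Q) T = T' + m * Q" unfolding T'_def by simp
      have "smult (lead_coeff Q ^ Suc e) T = smult (lead_coeff Q ^ e) (smult (lead_coeff Q) T)"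
        by (simp add: mult.commute)
      also have "\<dots> = smult (lead_coeff Q ^ e) T' + smult (lead_coeff Q ^ e) m * Q"
        unfolding e1 by (simp add: smult_add_right)
      also have "\<dots> = (S + smult (lead_coeff Q ^ e) m) * Q + Rm" using IH(3) by (simp add: algebra_simps)
      finally show ?thesis using IH
        by (intro exI[of _ "Suc e"] exI[of _ "S + smult (lead_coeff Q ^ e) m"] exI[of _ Rm])
          (auto intro!: sub_ringD(3)[OF CR] cpoly_smult[OF R] sub_ring_power[OF R] lcR mR)
    qed
  qed
qed

lemma map_pderiv_add: "map_poly pderiv (P + R) = map_poly pderiv P + map_poly pderiv (R :: 'b::idom poly poly)"
  by (rule poly_eqI) (simp add: coeff_map_poly pderiv_add)

lemma map_pderiv_minus: "map_poly pderiv (- P) = - map_poly pderiv (P :: 'b::idom poly poly)"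
  by (rule poly_eqI) (simp add: coeff_map_poly pderiv_minus)

lemma map_pderiv_diff: "map_poly pderiv (P - R) = map_poly pderiv P - map_poly pderiv (R :: 'b::idom poly poly)"
  by (rule poly_eqI) (simp add: coeff_map_poly pderiv_diff)

lemma pderiv_sum': "pderiv (sum f A) = (\<Sum>x\<in>A. pderiv (f x))"
  using higher_pderiv_sum[of 1 f A] by simp

lemma map_pderiv_mult: "map_poly pderiv (P * R) = map_poly pderiv P * R + P * map_poly pderiv (R :: 'b::idom poly poly)"
proof (rule poly_eqI)
  fix n
  have "coeff (map_poly pderiv (P * R)) n = (\<Sum>i\<le>n. coeff P i * pderiv (coeff R (n-i)) + coeff R (n-i) * pderiv (coeff P i))"
    by (simp add: coeff_map_poly coeff_mult pderiv_sum' pderiv_mult)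
  also have "\<dots> = (\<Sum>i\<le>n. pderiv (coeff P i) * coeff R (n-i)) + (\<Sum>i\<le>n. coeff P i * pderiv (coeff R (n-i)))"
    by (simp add: sum.distrib mult.commute)
  also have "\<dots> = coeff (map_poly pderiv P * R + P * map_poly pderiv R) n"
    by (simp only: coeff_add coeff_mult coeff_map_poly pderiv_0)
  finally show "coeff (map_poly pderiv (P * R)) n = coeff (map_poly pderiv P * R + P * map_poly pderiv R) n" .
qed

lemma map_kill:
  assumes "\<And>c. c \<in> T \<Longrightarrow> d c = 0" "d 0 = 0" "P \<in> cpoly (cpoly T)"
  shows "map_poly (map_poly d) P = 0"
proof (rule poly_eqI)
  fix n
  have "map_poly d (coeff P n) = 0"
  proof (rule poly_eqI)
    fix m show "coeff (map_poly d (coeff P n)) m = coeff 0 m"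
      using assms cpolyD[OF cpolyD[OF assms(3)]] by (simp add: coeff_map_poly)
  qed
  then show "coeff (map_poly (map_poly d) P) n = coeff 0 n"
    by (simp add: coeff_map_poly assms(2))
qed

locale base =
  fixes K k :: "'a::{alg_closed_field, field_char_0} set"
    and D :: "'a \<Rightarrow> 'a"
    and f a :: 'a
  assumes K: "differential_field K D"
    and k: "differential_subfield k K D"
    and k_closed: "alg_closed_subfield k"
    and same_consts: "constants K D = constants k D"
    and fK: "f \<in> K" and f0: "f \<noteq> 0" and fk: "f \<notin> k"
    and ak: "a \<in> k" and Df: "D f = a * f"
begin

lemma Ksf: "is_subfield K" and ksf: "is_subfield k" and kK: "k \<subseteq> K"
  using K k unfolding differential_field_def differential_subfield_def by auto

lemma KR: "sub_ring K" and kR: "sub_ring k"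
  using subfield_sub_ring Ksf ksf by auto

lemma Kd: "is_der K D" using K derivation_is_der unfolding differential_field_def by auto

lemma DK: "x \<in> K \<Longrightarrow> D x \<in> K" using K unfolding differential_field_def is_derivation_def by auto

lemma Dk: "x \<in> k \<Longrightarrow> D x \<in> k" using k unfolding differential_subfield_def by auto

lemma kPR: "sub_ring (cpoly k)" using sub_ring_cpoly[OF kR] .
lemma kP2R: "sub_ring (cpoly (cpoly k))" using sub_ring_cpoly[OF kPR] .

lemma in_k: "p \<in> cpoly k \<Longrightarrow> p \<noteq> 0 \<Longrightarrow> poly p z = 0 \<Longrightarrow> z \<in> k"
  using root_in_subfield[OF ksf k_closed] by blast

lemma transc: "p \<in> cpoly k \<Longrightarrow> p \<noteq> 0 \<Longrightarrow> poly p f \<noteq> 0"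
  using in_k fk by blast

lemma constsk: "x \<in> K \<Longrightarrow> D x = 0 \<Longrightarrow> x \<in> k"
  using same_consts unfolding constants_def by blast

definition ann :: "'a poly poly \<Rightarrow> 'a \<Rightarrow> bool" where
  "ann P z \<longleftrightarrow> P \<in> cpoly (cpoly k) \<and> P \<noteq> 0 \<and> ev2 P f z = 0"

lemma ann_deg: assumes "ann P z" shows "degree P > 0"
proof (rule ccontr)
  assume "\<not> degree P > 0"
  then obtain c where P: "P = [:c:]" using degree_eq_zeroE by blast
  have "c \<in> cpoly k" "c \<noteq> 0" using assms cpolyD[of "[:c:]" _ 0] unfolding ann_def P by auto
  with transc have "poly c f \<noteq> 0" by blast
  then show False using assms unfolding ann_def P by simp
qed

lemma min_ann: assumes "ann P z" shows "\<exists>Q. ann Q z \<and> (\<forall>P. ann P z \<longrightarrow> degree Q \<le> degree P)"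
proof -
  obtain n where "\<exists>P. ann P z \<and> degree P = n" "\<forall>m. (\<exists>P. ann P z \<and> degree P = m) \<longrightarrow> n \<le> m"
    using ex_has_least_nat[of "\<lambda>n. \<exists>P. ann P z \<and> degree P = n" "degree P" id] assms by auto
  then show ?thesis by blast
qed

end

locale gloc = base +
  fixes g :: 'a and Q :: "'a poly poly"
  assumes gK: "g \<in> K" and Qann: "ann Q g" and Qmin: "\<And>P. ann P g \<Longrightarrow> degree Q \<le> degree P"
begin

lemma QkP2: "Q \<in> cpoly (cpoly k)" and Q0: "Q \<noteq> 0" and Qg: "ev2 Q f g = 0"
  using Qann unfolding ann_def by auto

lemma Qzero: "P \<in> cpoly (cpoly k) \<Longrightarrow> ev2 P f g = 0 \<Longrightarrow> degree P < degree Q \<Longrightarrow> P = 0"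
  using Qmin unfolding ann_def by force

lemma QY: "ev2 (pderiv Q) f g \<noteq> 0"
proof
  assume h: "ev2 (pderiv Q) f g = 0"
  have "degree Q > 0" using ann_deg[OF Qann] .
  then have "pderiv Q \<noteq> 0" by (simp add: pderiv_eq_0_iff)
  moreover have "degree (pderiv Q) < degree Q" using \<open>degree Q > 0\<close> by (simp add: degree_pderiv)
  moreover have "pderiv Q \<in> cpoly (cpoly k)" by (rule cpoly_pderiv[OF kPR QkP2])
  ultimately show False using Qzero h by blast
qed

definition w :: 'a where "w = - (f * ev2 (map_poly pderiv Q) f g) / ev2 (pderiv Q) f g"

definition Phi :: "'a poly poly \<Rightarrow> 'a" where
  "Phi P = f * ev2 (map_poly pderiv P) f g + ev2 (pderiv P) f g * w"

lemma Phi_add: "Phi (P + R) = Phi P + Phi R"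
  by (simp add: Phi_def map_pderiv_add pderiv_add algebra_simps)

lemma Phi_diff: "Phi (P - R) = Phi P - Phi R"
  by (simp add: Phi_def map_pderiv_diff pderiv_diff algebra_simps)

lemma Phi_mult: "Phi (P * R) = Phi P * ev2 R f g + ev2 P f g * Phi R"
  by (simp add: Phi_def map_pderiv_mult pderiv_mult algebra_simps)

lemma Phi_Q: "Phi Q = 0"
  using QY by (simp add: Phi_def w_def field_simps)

lemma Phi_const: "Phi [:c:] = f * poly (pderiv c) f"
  by (simp add: Phi_def map_poly_pCons pderiv_pCons)

lemma Key: assumes T: "T \<in> cpoly (cpoly k)" and Tg: "ev2 T f g = 0" shows "Phi T = 0"
proof -
  obtain e S Rm where R: "S \<in> cpoly (cpoly k)" "Rm \<in> cpoly (cpoly k)"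
      "smult (lead_coeff Q ^ e) T = S * Q + Rm" "Rm = 0 \<or> degree Rm < degree Q"
    using pdiv_exists[OF kPR QkP2 Q0 T] by blast
  have "ev2 Rm f g = 0"
  proof -
    have "ev2 (smult (lead_coeff Q ^ e) T) f g = ev2 (S * Q + Rm) f g" using R(3) by simp
    then show ?thesis using Tg Qg by simp
  qed
  then have Rm0: "Rm = 0" using Qzero R(2) R(4) by blast
  have 1: "Phi ([:lead_coeff Q ^ e:] * T) = 0"
  proof -
    have "[:lead_coeff Q ^ e:] * T = S * Q" using R(3) Rm0 by simp
    then show ?thesis by (simp only:) (simp add: Phi_mult Phi_Q Qg)
  qed
  have "Phi ([:lead_coeff Q ^ e:] * T) = Phi [:lead_coeff Q ^ e:] * ev2 T f g + ev2 [:lead_coeff Q ^ e:] f g * Phi T"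
    by (rule Phi_mult)
  then have "poly (lead_coeff Q ^ e) f * Phi T = 0" using 1 Tg by simp
  moreover have "poly (lead_coeff Q) f \<noteq> 0"
    using transc[of "lead_coeff Q"] cpolyD[OF QkP2] Q0 by simp
  ultimately show ?thesis by (simp add: poly_power)
qed

end

context gloc begin

abbreviation "P2 \<equiv> cpoly (cpoly k)"

definition Eset :: "'a set" where
  "Eset = {z. \<exists>P R. P \<in> P2 \<and> R \<in> P2 \<and> ev2 R f g \<noteq> 0 \<and> z = ev2 P f g / ev2 R f g}"

definition Efml :: "'a poly poly \<Rightarrow> 'a poly poly \<Rightarrow> 'a" where
  "Efml P R = (Phi P * ev2 R f g - ev2 P f g * Phi R) / (ev2 R f g)^2"

definition Ef :: "'a \<Rightarrow> 'a" where
  "Ef z = (THE v. \<exists>P R. P \<in> P2 \<and> R \<in> P2 \<and> ev2 R f g \<noteq> 0 \<and> z = ev2 P f g / ev2 R f g \<and> v = Efml P R)"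

lemma Efml_unique:
  assumes "P1 \<in> P2" "R1 \<in> P2" "ev2 R1 f g \<noteq> 0" "P2' \<in> P2" "R2 \<in> P2" "ev2 R2 f g \<noteq> 0"
    and eq: "ev2 P1 f g / ev2 R1 f g = ev2 P2' f g / ev2 R2 f g"
  shows "Efml P1 R1 = Efml P2' R2"
proof -
  define T where "T = P1 * R2 - P2' * R1"
  have T: "T \<in> P2" unfolding T_def using assms by (intro sub_ringD[OF kP2R]) auto
  have e2: "ev2 P1 f g * ev2 R2 f g = ev2 P2' f g * ev2 R1 f g"
    using eq assms by (simp add: field_simps)
  then have "ev2 T f g = 0" by (simp add: T_def)
  then have "Phi T = 0" using Key T by blast
  then have e1: "Phi P1 * ev2 R2 f g + ev2 P1 f g * Phi R2 = Phi P2' * ev2 R1 f g + ev2 P2' f g * Phi R1"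
    by (simp add: T_def Phi_diff Phi_mult)
  have "(Phi P1 * ev2 R1 f g - ev2 P1 f g * Phi R1) * (ev2 R2 f g)^2
      = (Phi P2' * ev2 R2 f g - ev2 P2' f g * Phi R2) * (ev2 R1 f g)^2"
    using e1 e2 by algebra
  then show ?thesis using assms unfolding Efml_def by (simp add: field_simps)
qed

lemma Ef_rep:
  assumes "P \<in> P2" "R \<in> P2" "ev2 R f g \<noteq> 0"
  shows "Ef (ev2 P f g / ev2 R f g) = Efml P R"
  unfolding Ef_def
proof (rule the_equality)
  show "\<exists>P' R'. P' \<in> P2 \<and> R' \<in> P2 \<and> ev2 R' f g \<noteq> 0 \<and> ev2 P f g / ev2 R f g = ev2 P' f g / ev2 R' f g \<and> Efml P R = Efml P' R'"
    using assms by blast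
next
  fix v assume "\<exists>P' R'. P' \<in> P2 \<and> R' \<in> P2 \<and> ev2 R' f g \<noteq> 0 \<and> ev2 P f g / ev2 R f g = ev2 P' f g / ev2 R' f g \<and> v = Efml P' R'"
  then show "v = Efml P R" using Efml_unique assms by metis
qed

lemma P2_1: "1 \<in> P2" and P2_0: "0 \<in> P2" using sub_ringD[OF kP2R] by auto

lemma Phi_1: "Phi 1 = 0"
proof -
  have "map_poly pderiv (1::'a poly poly) = 0" by (rule poly_eqI) (simp add: coeff_map_poly coeff_1)
  then show ?thesis by (simp add: Phi_def)
qed

lemma frac_add: "r1 \<noteq> 0 \<Longrightarrow> r2 \<noteq> 0 \<Longrightarrow> p1/r1 + p2/r2 = (p1*r2 + p2*r1)/(r1*r2)"
  for p1 :: 'a by (simp add: field_simps)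
lemma frac_mult: "r1 \<noteq> 0 \<Longrightarrow> r2 \<noteq> 0 \<Longrightarrow> (p1/r1) * (p2/r2) = (p1*p2)/(r1*r2)"
  for p1 :: 'a by (simp add: field_simps)

lemma Ef_ev2: "P \<in> P2 \<Longrightarrow> Ef (ev2 P f g) = Phi P"
  using Ef_rep[of P 1] P2_1 by (simp add: Efml_def Phi_1)

lemma E_ev2: "P \<in> P2 \<Longrightarrow> ev2 P f g \<in> Eset"
  unfolding Eset_def using P2_1 by (intro CollectI exI[of _ P] exI[of _ 1]) simp

lemma E_add: assumes "x \<in> Eset" "y \<in> Eset" shows "x + y \<in> Eset"
proof -
  obtain P1 R1 P2' R2 where r: "P1 \<in> P2" "R1 \<in> P2" "ev2 R1 f g \<noteq> 0" "x = ev2 P1 f g / ev2 R1 f g"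
    "P2' \<in> P2" "R2 \<in> P2" "ev2 R2 f g \<noteq> 0" "y = ev2 P2' f g / ev2 R2 f g"
    using assms unfolding Eset_def by blast
  have "x + y = ev2 (P1 * R2 + P2' * R1) f g / ev2 (R1 * R2) f g"
    unfolding r(4) r(8) ev2_add ev2_mult by (rule frac_add[OF r(3) r(7)])
  moreover have "P1 * R2 + P2' * R1 \<in> P2" "R1 * R2 \<in> P2" using r by (auto intro!: sub_ringD[OF kP2R])
  moreover have "ev2 (R1 * R2) f g \<noteq> 0" using r by simp
  ultimately show ?thesis unfolding Eset_def by blast
qed

lemma E_mult: assumes "x \<in> Eset" "y \<in> Eset" shows "x * y \<in> Eset"
proof -
  obtain P1 R1 P2' R2 where r: "P1 \<in> P2" "R1 \<in> P2" "ev2 R1 f g \<noteq> 0" "x = ev2 P1 f g / ev2 R1 f g"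
    "P2' \<in> P2" "R2 \<in> P2" "ev2 R2 f g \<noteq> 0" "y = ev2 P2' f g / ev2 R2 f g"
    using assms unfolding Eset_def by blast
  have "x * y = ev2 (P1 * P2') f g / ev2 (R1 * R2) f g"
    unfolding r(4) r(8) ev2_add ev2_mult by (rule frac_mult[OF r(3) r(7)])
  moreover have "P1 * P2' \<in> P2" "R1 * R2 \<in> P2" using r by (auto intro!: sub_ringD[OF kP2R])
  moreover have "ev2 (R1 * R2) f g \<noteq> 0" using r by simp
  ultimately show ?thesis unfolding Eset_def by blast
qed

lemma E_uminus: assumes "x \<in> Eset" shows "- x \<in> Eset"
proof -
  obtain P1 R1 where r: "P1 \<in> P2" "R1 \<in> P2" "ev2 R1 f g \<noteq> 0" "x = ev2 P1 f g / ev2 R1 f g"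
    using assms unfolding Eset_def by blast
  show ?thesis unfolding Eset_def
    by (intro CollectI exI[of _ "- P1"] exI[of _ "R1"])
       (use r in \<open>auto intro!: sub_ringD[OF kP2R]\<close>)
qed

lemma E_inverse: assumes "x \<in> Eset" shows "inverse x \<in> Eset"
proof -
  obtain P1 R1 where r: "P1 \<in> P2" "R1 \<in> P2" "ev2 R1 f g \<noteq> 0" "x = ev2 P1 f g / ev2 R1 f g"
    using assms unfolding Eset_def by blast
  show ?thesis
  proof (cases "ev2 P1 f g = 0")
    case True
    then show ?thesis using r E_ev2[OF P2_0] by simp
  next
    case False
    show ?thesis unfolding Eset_def
      by (intro CollectI exI[of _ R1] exI[of _ P1]) (use r False in auto)
  qed
qed

lemma E_R: "sub_ring Eset"
  unfolding sub_ring_def using E_add E_mult E_uminus E_ev2[OF P2_0] E_ev2[OF P2_1] by auto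

lemma E_sf: "is_subfield Eset"
  unfolding is_subfield_def using E_add E_mult E_uminus E_ev2[OF P2_0] E_ev2[OF P2_1] E_inverse by auto

lemma E_diff: "x \<in> Eset \<Longrightarrow> y \<in> Eset \<Longrightarrow> x - y \<in> Eset" using sub_ringD(6)[OF E_R] .
lemma E_div: "x \<in> Eset \<Longrightarrow> y \<in> Eset \<Longrightarrow> x / y \<in> Eset" using subfield_divide[OF E_sf] .

lemma E_k: "c \<in> k \<Longrightarrow> c \<in> Eset"
  using E_ev2[of "[:[:c:]:]"] sub_ringD(1)[OF kR] sub_ringD(1)[OF kPR]
  by (simp add: cpoly_const)

lemma Xk: "[:0, 1:] \<in> cpoly k"
  using sub_ringD(1,2)[OF kR] sub_ringD(1)[OF kPR] by (simp add: cpoly_pCons cpoly_const)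

lemma E_f: "f \<in> Eset"
  using E_ev2[of "[:[:0,1:]:]"] Xk sub_ringD(1)[OF kPR] by (simp add: cpoly_const)

lemma E_g: "g \<in> Eset"
  using E_ev2[of "[:0,1:]"] sub_ringD(1,2)[OF kPR] P2_0 by (simp add: cpoly_pCons cpoly_const)

lemma E_w: "w \<in> Eset"
  unfolding w_def using QkP2
  by (intro E_div E_uminus E_mult E_f E_ev2 cpoly_pderiv[OF kPR] cpoly_map[where S="cpoly k"] sub_ringD(1)[OF kPR])
     (auto intro: cpoly_pderiv[OF kR])

lemma E_Phi: "P \<in> P2 \<Longrightarrow> Phi P \<in> Eset"
  unfolding Phi_def
  by (intro E_add E_mult E_f E_w E_ev2 cpoly_pderiv[OF kPR] cpoly_map[where S="cpoly k"] sub_ringD(1)[OF kPR])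
     (auto intro: cpoly_pderiv[OF kR])

lemma E_Ef: assumes "x \<in> Eset" shows "Ef x \<in> Eset"
proof -
  obtain P1 R1 where r: "P1 \<in> P2" "R1 \<in> P2" "ev2 R1 f g \<noteq> 0" "x = ev2 P1 f g / ev2 R1 f g"
    using assms unfolding Eset_def by blast
  show ?thesis unfolding r(4) Ef_rep[OF r(1-3)] Efml_def
    by (intro E_div E_diff E_mult E_Phi E_ev2 r sub_ring_power[OF E_R])
qed

lemma E_K: "Eset \<subseteq> K"
proof
  fix z assume "z \<in> Eset"
  then obtain P1 R1 where r: "P1 \<in> P2" "R1 \<in> P2" "ev2 R1 f g \<noteq> 0" "z = ev2 P1 f g / ev2 R1 f g"
    unfolding Eset_def by blast
  show "z \<in> K" unfolding r(4)
    by (intro subfield_divide[OF Ksf] ev2_in_sub_ring[OF KR kK] r fK gK)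
qed

lemma Ef_der: "is_der Eset Ef"
  unfolding is_der_def
proof (intro ballI conjI)
  fix x y assume "x \<in> Eset" "y \<in> Eset"
  then obtain P1 R1 P2' R2 where r: "P1 \<in> P2" "R1 \<in> P2" "ev2 R1 f g \<noteq> 0" "x = ev2 P1 f g / ev2 R1 f g"
    "P2' \<in> P2" "R2 \<in> P2" "ev2 R2 f g \<noteq> 0" "y = ev2 P2' f g / ev2 R2 f g"
    unfolding Eset_def by blast
  have s1: "P1 * R2 + P2' * R1 \<in> P2" "R1 * R2 \<in> P2" "P1 * P2' \<in> P2" using r by (auto intro!: sub_ringD[OF kP2R])
  have nz: "ev2 (R1 * R2) f g \<noteq> 0" using r by simp
  have ex: "Ef x = Efml P1 R1" using Ef_rep[OF r(1-3)] r(4) by simp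
  have ey: "Ef y = Efml P2' R2" using Ef_rep[OF r(5-7)] r(8) by simp
  have "x + y = ev2 (P1 * R2 + P2' * R1) f g / ev2 (R1 * R2) f g"
    unfolding r(4) r(8) ev2_add ev2_mult by (rule frac_add[OF r(3) r(7)])
  then have exy: "Ef (x + y) = Efml (P1 * R2 + P2' * R1) (R1 * R2)" using Ef_rep[OF s1(1) s1(2) nz] by simp
  show "Ef (x + y) = Ef x + Ef y"
    unfolding exy ex ey Efml_def Phi_add Phi_mult ev2_add ev2_mult
    using r(3,7) by (simp add: field_simps power2_eq_square)
  have "x * y = ev2 (P1 * P2') f g / ev2 (R1 * R2) f g"
    unfolding r(4) r(8) ev2_add ev2_mult by (rule frac_mult[OF r(3) r(7)])
  then have exy': "Ef (x * y) = Efml (P1 * P2') (R1 * R2)" using Ef_rep[OF s1(3) s1(2) nz] by simp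
  show "Ef (x * y) = x * Ef y + Ef x * y"
    unfolding exy' ex ey unfolding Efml_def Phi_add Phi_mult ev2_add ev2_mult r(4) r(8)
    using r(3,7) by (simp add: field_simps power2_eq_square)
qed

lemma Ef_k: "c \<in> k \<Longrightarrow> Ef c = 0"
  using Ef_ev2[of "[:[:c:]:]"] sub_ringD(1)[OF kR] sub_ringD(1)[OF kPR]
  by (simp add: cpoly_const Phi_const)

lemma Ef_f: "Ef f = f"
  using Ef_ev2[of "[:[:0,1:]:]"] Xk sub_ringD(1)[OF kPR] by (simp add: cpoly_const Phi_const pderiv_pCons)

lemma Ef_g: "Ef g = w"
proof -
  have "[:0,1:] \<in> P2" using sub_ringD(1,2)[OF kPR] P2_0 by (simp add: cpoly_pCons cpoly_const)
  then show ?thesis using Ef_ev2[of "[:0,1:]"] by (simp add: Phi_def pderiv_pCons map_poly_pCons)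
qed

end

lemma der_restrict: "is_der S d \<Longrightarrow> T \<subseteq> S \<Longrightarrow> is_der T d"
  unfolding is_der_def by blast

lemma der_div:
  fixes S :: "'b::field set"
  assumes S: "is_subfield S" and d: "is_der S d" and x: "x \<in> S" and y: "y \<in> S" "y \<noteq> 0"
  shows "d (x / y) = (d x * y - x * d y) / y^2"
proof -
  have xy: "x / y \<in> S" using subfield_divide[OF S x y(1)] .
  have "d x = d ((x / y) * y)" using y by simp
  also have "\<dots> = (x / y) * d y + d (x / y) * y" by (rule is_derD(2)[OF d xy y(1)])
  finally show ?thesis using y(2) by (simp add: field_simps power2_eq_square)
qed

lemma solve_lin: fixes A :: "'b::field" assumes "0 = A + C * x" "C \<noteq> 0" shows "x = - A / C"
proof -
  have "C * x = - A" using assms(1) by (simp add: eq_neg_iff_add_eq_0 add.commute)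
  then show ?thesis using assms(2) by (simp add: field_simps)
qed

lemma der_commutator:
  assumes R: "sub_ring S" and d1: "is_der S d1" and d2: "is_der S d2"
    and m1: "\<And>x. x \<in> S \<Longrightarrow> d1 x \<in> S" and m2: "\<And>x. x \<in> S \<Longrightarrow> d2 x \<in> S"
  shows "is_der S (\<lambda>z. d1 (d2 z) - d2 (d1 z))"
  unfolding is_der_def
proof (intro ballI conjI)
  fix x y assume x: "x \<in> S" and y: "y \<in> S"
  note R1 = sub_ringD[OF R]
  show "d1 (d2 (x + y)) - d2 (d1 (x + y)) = d1 (d2 x) - d2 (d1 x) + (d1 (d2 y) - d2 (d1 y))"
    using x y m1 m2 by (simp add: is_derD[OF d1] is_derD[OF d2])
  have "d1 (d2 (x * y)) = d1 (x * d2 y) + d1 (d2 x * y)"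
    using x y m2 R1 by (simp add: is_derD[OF d1] is_derD[OF d2])
  also have "\<dots> = x * d1 (d2 y) + d1 x * d2 y + (d2 x * d1 y + d1 (d2 x) * y)"
    using x y m2 R1 by (simp add: is_derD[OF d1])
  finally have e1: "d1 (d2 (x * y)) = x * d1 (d2 y) + d1 x * d2 y + (d2 x * d1 y + d1 (d2 x) * y)" .
  have "d2 (d1 (x * y)) = d2 (x * d1 y) + d2 (d1 x * y)"
    using x y m1 R1 by (simp add: is_derD[OF d1] is_derD[OF d2])
  also have "\<dots> = x * d2 (d1 y) + d2 x * d1 y + (d1 x * d2 y + d2 (d1 x) * y)"
    using x y m1 R1 by (simp add: is_derD[OF d2])
  finally have e2: "d2 (d1 (x * y)) = x * d2 (d1 y) + d2 x * d1 y + (d1 x * d2 y + d2 (d1 x) * y)" .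
  show "d1 (d2 (x * y)) - d2 (d1 (x * y)) = x * (d1 (d2 y) - d2 (d1 y)) + (d1 (d2 x) - d2 (d1 x)) * y"
    unfolding e1 e2 by (simp add: algebra_simps)
qed

context gloc begin

lemma D0: "D 0 = 0" using der_zero[OF KR Kd] .

lemma Ef0: "Ef 0 = 0" using der_zero[OF E_R Ef_der] .

lemma map2D: "P \<in> P2 \<Longrightarrow> map_poly (map_poly D) P \<in> P2"
  by (intro cpoly_map[where S="cpoly k"] sub_ringD(1)[OF kPR]) (auto intro!: cpoly_map Dk sub_ringD(1)[OF kR] simp: D0)

lemma mapX: "P \<in> P2 \<Longrightarrow> map_poly pderiv P \<in> P2"
  by (intro cpoly_map[where S="cpoly k"] sub_ringD(1)[OF kPR]) (auto intro: cpoly_pderiv[OF kR])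

lemma D_ev2: "P \<in> P2 \<Longrightarrow> D (ev2 P f g) = ev2 (map_poly (map_poly D) P) f g + ev2 (map_poly pderiv P) f g * (a * f)
            + ev2 (pderiv P) f g * D g"
  using chain2[OF KR Kd kK _ fK gK] Df by simp

lemma Dg_E: "D g \<in> Eset"
proof -
  have "0 = D (ev2 Q f g)" using Qg D0 by simp
  also have "\<dots> = ev2 (map_poly (map_poly D) Q) f g + ev2 (map_poly pderiv Q) f g * (a * f)
            + ev2 (pderiv Q) f g * D g" by (rule D_ev2[OF QkP2])
  finally have "D g = - (ev2 (map_poly (map_poly D) Q) f g + ev2 (map_poly pderiv Q) f g * (a * f)) / ev2 (pderiv Q) f g"
    using QY solve_lin by (metis add.assoc mult.commute)
  also have "\<dots> \<in> Eset"
    by (intro E_div E_uminus E_add E_mult E_ev2 map2D mapX QkP2 E_k ak E_f cpoly_pderiv[OF kPR])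
  finally show ?thesis .
qed

lemma D_E: assumes z: "z \<in> Eset" shows "D z \<in> Eset"
proof -
  obtain P R where r: "P \<in> P2" "R \<in> P2" "ev2 R f g \<noteq> 0" "z = ev2 P f g / ev2 R f g"
    using z unfolding Eset_def by blast
  have ev: "D (ev2 P f g) \<in> Eset" if "P \<in> P2" for P
    unfolding D_ev2[OF that]
    by (intro E_add E_mult E_ev2 map2D mapX that E_k ak E_f Dg_E cpoly_pderiv[OF kPR])
  have K1: "ev2 P f g \<in> K" "ev2 R f g \<in> K" using r E_ev2 E_K by auto
  show ?thesis unfolding r(4) der_div[OF Ksf Kd K1 r(3)]
    by (intro E_div E_diff E_mult ev E_ev2 r sub_ring_power[OF E_R])
qed

definition dc :: "'a \<Rightarrow> 'a" where "dc z = D (Ef z) - Ef (D z)"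

lemma dc_der: "is_der Eset dc"
  unfolding dc_def
  by (rule der_commutator[OF E_R der_restrict[OF Kd E_K] Ef_der D_E E_Ef])

lemma dc_k: "c \<in> k \<Longrightarrow> dc c = 0"
  unfolding dc_def using Ef_k Dk D0 by simp

lemma dc_f: "dc f = 0"
proof -
  have "Ef (a * f) = a * Ef f + Ef a * f" by (rule is_derD(2)[OF Ef_der E_k[OF ak] E_f])
  then show ?thesis unfolding dc_def using Ef_f Df Ef_k[OF ak] by simp
qed

lemma dc_ev2: assumes P: "P \<in> P2" shows "dc (ev2 P f g) = ev2 (pderiv P) f g * dc g"
proof -
  have "dc (ev2 P f g) = ev2 (map_poly (map_poly dc) P) f g + ev2 (map_poly pderiv P) f g * dc f + ev2 (pderiv P) f g * dc g"
    by (rule chain2[OF E_R dc_der _ P E_f E_g]) (use E_k in blast)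
  moreover have "map_poly (map_poly dc) P = 0"
    by (rule map_kill[where T=k and d=dc, OF dc_k der_zero[OF E_R dc_der] P])
  ultimately show ?thesis using dc_f by simp
qed

lemma dc_g: "dc g = 0"
  using dc_ev2[OF QkP2] Qg der_zero[OF E_R dc_der] QY by simp

lemma dc_E: assumes z: "z \<in> Eset" shows "dc z = 0"
proof -
  obtain P R where r: "P \<in> P2" "R \<in> P2" "ev2 R f g \<noteq> 0" "z = ev2 P f g / ev2 R f g"
    using z unfolding Eset_def by blast
  show ?thesis unfolding r(4) der_div[OF E_sf dc_der E_ev2[OF r(1)] E_ev2[OF r(2)] r(3)]
    using dc_ev2[OF r(1)] dc_ev2[OF r(2)] dc_g by simp
qed

lemma commute: "z \<in> Eset \<Longrightarrow> D (Ef z) = Ef (D z)"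
  using dc_E unfolding dc_def by fastforce

end

lemma ev2_sum: "ev2 (sum F A) x y = (\<Sum>i\<in>A. ev2 (F i) x y)"
  by (induction A rule: infinite_finite_induct) simp_all

lemma ev2_altdef: "ev2 P x y = (\<Sum>j\<le>degree P. poly (coeff P j) x * y ^ j)"
proof -
  have "ev2 P x y = ev2 (\<Sum>j\<le>degree P. monom (coeff P j) j) x y" by (simp add: poly_as_sum_of_monoms)
  also have "\<dots> = (\<Sum>j\<le>degree P. poly (coeff P j) x * y ^ j)" by (simp add: ev2_sum)
  finally show ?thesis .
qed

lemma coeff_sum_monom: "coeff (\<Sum>i\<le>(d::nat). monom (c i) i) n = (if n \<le> d then c n else 0)"
  by (simp add: coeff_sum coeff_monom)

lemma cpoly_sum: "sub_ring S \<Longrightarrow> (\<And>i. i \<in> A \<Longrightarrow> F i \<in> cpoly S) \<Longrightarrow> sum F A \<in> cpoly S"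
  using sub_ring_sum[OF sub_ring_cpoly] by blast

context gloc begin

definition Fset :: "'a set" where
  "Fset = {x. \<exists>p q. p \<in> cpoly k \<and> q \<in> cpoly k \<and> q \<noteq> 0 \<and> x = poly p f / poly q f}"

lemma F_sf: "is_subfield Fset"
proof -
  note kk = sub_ringD[OF kPR]
  have one: "(1::'a poly) \<in> cpoly k" using kk by simp
  have pq: "poly q f \<noteq> 0" if "q \<in> cpoly k" "q \<noteq> 0" for q using transc that by blast
  show ?thesis unfolding is_subfield_def
  proof (intro conjI ballI impI)
    show "0 \<in> Fset" unfolding Fset_def using kk one by (intro CollectI exI[of _ 0] exI[of _ 1]) auto
    show "1 \<in> Fset" unfolding Fset_def using kk one by (intro CollectI exI[of _ 1] exI[of _ 1]) auto
    fix x y assume x: "x \<in> Fset" and y: "y \<in> Fset"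
    obtain p1 q1 p2 q2 where r: "p1 \<in> cpoly k" "q1 \<in> cpoly k" "q1 \<noteq> 0" "x = poly p1 f / poly q1 f"
      "p2 \<in> cpoly k" "q2 \<in> cpoly k" "q2 \<noteq> 0" "y = poly p2 f / poly q2 f"
      using x y unfolding Fset_def by blast
    have n1: "poly q1 f \<noteq> 0" "poly q2 f \<noteq> 0" using pq r by auto
    have "x + y = poly (p1 * q2 + p2 * q1) f / poly (q1 * q2) f" unfolding r(4) r(8) using n1 by (simp add: field_simps)
    then show "x + y \<in> Fset" unfolding Fset_def using r kk by (intro CollectI exI[of _ "p1 * q2 + p2 * q1"] exI[of _ "q1 * q2"]) auto
    have "x * y = poly (p1 * p2) f / poly (q1 * q2) f" unfolding r(4) r(8) using n1 by (simp add: field_simps)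
    then show "x * y \<in> Fset" unfolding Fset_def using r kk by (intro CollectI exI[of _ "p1 * p2"] exI[of _ "q1 * q2"]) auto
  next
    fix x assume x: "x \<in> Fset"
    obtain p1 q1 where r: "p1 \<in> cpoly k" "q1 \<in> cpoly k" "q1 \<noteq> 0" "x = poly p1 f / poly q1 f"
      using x unfolding Fset_def by blast
    show "- x \<in> Fset" unfolding Fset_def using r kk by (intro CollectI exI[of _ "- p1"] exI[of _ "q1"]) auto
    assume "x \<noteq> 0"
    then have "p1 \<noteq> 0" using r by auto
    then show "inverse x \<in> Fset" unfolding Fset_def using r by (intro CollectI exI[of _ q1] exI[of _ p1]) (auto simp: field_simps)
  qed
qed

lemma F_R: "sub_ring Fset" using subfield_sub_ring[OF F_sf] .

lemma F_poly: "p \<in> cpoly k \<Longrightarrow> poly p f \<in> Fset"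
  unfolding Fset_def using sub_ringD(2)[OF kPR] by (intro CollectI exI[of _ p] exI[of _ 1]) auto

abbreviation dQ where "dQ \<equiv> degree Q"

lemma dQ_pos: "dQ > 0" using ann_deg[OF Qann] .

definition Vset :: "'a set" where
  "Vset = {x. \<exists>c. (\<forall>j<dQ. c j \<in> Fset) \<and> x = (\<Sum>j<dQ. c j * g ^ j)}"

lemma V_add: assumes "x \<in> Vset" "y \<in> Vset" shows "x + y \<in> Vset"
proof -
  obtain c1 c2 where "\<forall>j<dQ. c1 j \<in> Fset" "x = (\<Sum>j<dQ. c1 j * g ^ j)" "\<forall>j<dQ. c2 j \<in> Fset" "y = (\<Sum>j<dQ. c2 j * g ^ j)"
    using assms unfolding Vset_def by blast
  then show ?thesis unfolding Vset_def
    by (intro CollectI exI[of _ "\<lambda>j. c1 j + c2 j"]) (auto simp: sum.distrib algebra_simps sub_ringD[OF F_R])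
qed

lemma V_Fmult: assumes "u \<in> Fset" "x \<in> Vset" shows "u * x \<in> Vset"
proof -
  obtain c1 where "\<forall>j<dQ. c1 j \<in> Fset" "x = (\<Sum>j<dQ. c1 j * g ^ j)"
    using assms unfolding Vset_def by blast
  then show ?thesis unfolding Vset_def using assms(1)
    by (intro CollectI exI[of _ "\<lambda>j. u * c1 j"]) (auto simp: sum_distrib_left algebra_simps sub_ringD[OF F_R])
qed

lemma V_0: "0 \<in> Vset"
  unfolding Vset_def using sub_ringD(1)[OF F_R] by (intro CollectI exI[of _ "\<lambda>j. 0"]) auto

lemma V_sum: "(\<And>i. i \<in> A \<Longrightarrow> x i \<in> Vset) \<Longrightarrow> sum x A \<in> Vset"
  by (induction A rule: infinite_finite_induct) (auto intro: V_add V_0)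

lemma V_gpow: assumes "j < dQ" shows "g ^ j \<in> Vset"
proof -
  have "(\<Sum>i<dQ. (if i = j then 1 else 0) * g ^ i) = (\<Sum>i<dQ. if i = j then g ^ i else 0)"
    by (rule sum.cong) auto
  also have "\<dots> = g ^ j" using assms by simp
  finally show ?thesis unfolding Vset_def using sub_ringD(1,2)[OF F_R]
    by (intro CollectI exI[of _ "\<lambda>i. if i = j then 1 else 0"]) auto
qed

lemma V_F: "u \<in> Fset \<Longrightarrow> u \<in> Vset"
  using V_Fmult[OF _ V_gpow[OF dQ_pos]] by simp

lemma V_gd: "g ^ dQ \<in> Vset"
proof -
  have lc: "poly (lead_coeff Q) f \<noteq> 0" using transc cpolyD[OF QkP2] Q0 by simp
  have "0 = (\<Sum>j\<le>dQ. poly (coeff Q j) f * g ^ j)" using Qg by (simp add: ev2_altdef)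
  also have "\<dots> = (\<Sum>j<dQ. poly (coeff Q j) f * g ^ j) + poly (lead_coeff Q) f * g ^ dQ"
    by (simp add: lessThan_Suc_atMost[symmetric])
  finally have "g ^ dQ = (\<Sum>j<dQ. (- poly (coeff Q j) f / poly (lead_coeff Q) f) * g ^ j)"
    using lc by (simp add: field_simps sum_divide_distrib[symmetric] eq_neg_iff_add_eq_0 add.commute sum_negf)
  also have "\<dots> \<in> Vset"
  proof (intro V_sum V_Fmult)
    fix j assume j: "j \<in> {..<dQ}"
    show "g ^ j \<in> Vset" using j by (simp add: V_gpow)
    show "- poly (coeff Q j) f / poly (lead_coeff Q) f \<in> Fset"
      by (intro subfield_divide[OF F_sf] sub_ringD(5)[OF F_R] F_poly cpolyD[OF QkP2])
  qed
  finally show ?thesis .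
qed

lemma V_gmult: assumes "x \<in> Vset" shows "g * x \<in> Vset"
proof -
  obtain c1 where c: "\<forall>j<dQ. c1 j \<in> Fset" "x = (\<Sum>j<dQ. c1 j * g ^ j)"
    using assms unfolding Vset_def by blast
  have "g * x = (\<Sum>j<dQ. c1 j * g ^ Suc j)" unfolding c(2) by (simp add: sum_distrib_left algebra_simps)
  also have "\<dots> \<in> Vset"
  proof (intro V_sum V_Fmult)
    fix j assume j: "j \<in> {..<dQ}"
    then show "c1 j \<in> Fset" using c by auto
    show "g ^ Suc j \<in> Vset" using j V_gpow[of "Suc j"] V_gd by (cases "Suc j = dQ") auto
  qed
  finally show ?thesis .
qed

lemma V_gpow_mult: "x \<in> Vset \<Longrightarrow> g ^ n * x \<in> Vset"
  by (induction n) (auto simp: mult.assoc intro: V_gmult)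

lemma V_mult: assumes "x \<in> Vset" "y \<in> Vset" shows "x * y \<in> Vset"
proof -
  obtain c1 where c: "\<forall>j<dQ. c1 j \<in> Fset" "x = (\<Sum>j<dQ. c1 j * g ^ j)"
    using assms unfolding Vset_def by blast
  have "x * y = (\<Sum>j<dQ. c1 j * (g ^ j * y))" unfolding c(2) by (simp add: sum_distrib_right mult.assoc)
  also have "\<dots> \<in> Vset" using c(1) assms(2) by (intro V_sum V_Fmult V_gpow_mult) auto
  finally show ?thesis .
qed

lemma V_R: "sub_ring Vset"
  unfolding sub_ring_def
  using V_add V_mult V_0 V_F sub_ringD(2)[OF F_R] V_Fmult[OF sub_ringD(5)[OF F_R sub_ringD(2)[OF F_R]]]
  by auto

lemma V_dep:
  assumes z: "z \<in> Vset"
  shows "\<exists>c. (\<forall>i\<le>dQ. c i \<in> Fset) \<and> (\<exists>i\<le>dQ. c i \<noteq> 0) \<and> (\<Sum>i\<le>dQ. c i * z ^ i) = 0"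
proof -
  have "\<forall>i. \<exists>c. (\<forall>j<dQ. c j \<in> Fset) \<and> z ^ i = (\<Sum>j<dQ. c j * g ^ j)"
    using sub_ring_power[OF V_R z] unfolding Vset_def by blast
  then obtain M where M: "\<And>i. (\<forall>j<dQ. M i j \<in> Fset) \<and> z ^ i = (\<Sum>j<dQ. M i j * g ^ j)"
    by metis
  obtain c where c: "\<forall>i\<in>{..dQ}. c i \<in> Fset" "\<exists>i\<in>{..dQ}. c i \<noteq> 0"
      "\<forall>j\<in>{..<dQ}. (\<Sum>i\<in>{..dQ}. c i * M i j) = 0"
    using LA[OF F_sf, of "{..<dQ}" "{..dQ}" M] M by auto
  have "(\<Sum>i\<le>dQ. c i * z ^ i) = (\<Sum>i\<le>dQ. \<Sum>j<dQ. c i * M i j * g ^ j)"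
    using M by (simp add: sum_distrib_left mult.assoc)
  also have "\<dots> = (\<Sum>j<dQ. (\<Sum>i\<le>dQ. c i * M i j) * g ^ j)"
    by (subst sum.swap) (simp add: sum_distrib_right)
  also have "\<dots> = 0" using c(3) by simp
  finally show ?thesis using c by blast
qed

lemma V_inv_aux:
  assumes r: "r \<in> Vset" "r \<noteq> 0"
  shows "p \<in> cpoly Fset \<Longrightarrow> p \<noteq> 0 \<Longrightarrow> poly p r = 0 \<Longrightarrow> inverse r \<in> Vset"
proof (induction "degree p" arbitrary: p rule: less_induct)
  case less
  define p2 where "p2 = synthetic_div p 0"
  have F0: "0 \<in> Fset" using sub_ringD(1)[OF F_R] .
  have p2F: "p2 \<in> cpoly Fset" unfolding p2_def by (rule synth_cpoly[OF F_R F0 less.prems(1)])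
  have pp: "p = [:0, 1:] * p2 + [:poly p 0:]" using synthetic_div_correct'[of 0 p] by (simp add: p2_def)
  have p0F: "poly p 0 \<in> Fset" using cpolyD[OF less.prems(1), of 0] by (simp add: poly_0_coeff_0)
  have "poly p r = r * poly p2 r + poly p 0" by (subst pp) simp
  then have ev: "0 = r * poly p2 r + poly p 0" using less.prems(3) by simp
  show ?case
  proof (cases "poly p 0 = 0")
    case False
    have "inverse r = - inverse (poly p 0) * poly p2 r"
      using ev r(2) False by (simp add: field_simps eq_neg_iff_add_eq_0)
    also have "\<dots> \<in> Vset"
      by (intro V_mult V_F sub_ringD(5)[OF F_R] subfield_inverse[OF F_sf] p0F poly_in_sub_ring[OF V_R _ p2F r(1)])
         (auto intro: V_F)
    finally show ?thesis .
  next
    case True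
    then have pp2: "p = [:0, 1:] * p2" using pp by simp
    then have "p2 \<noteq> 0" using less.prems(2) by auto
    moreover have "degree p2 < degree p" using pp2 \<open>p2 \<noteq> 0\<close> by (simp add: degree_mult_eq)
    moreover have "poly p2 r = 0" using less.prems(3) pp2 r(2) by simp
    ultimately show ?thesis using less.hyps p2F by blast
  qed
qed

lemma V_inv: assumes r: "r \<in> Vset" shows "inverse r \<in> Vset"
proof (cases "r = 0")
  case True then show ?thesis using V_0 by simp
next
  case False
  obtain c where c: "\<forall>i\<le>dQ. c i \<in> Fset" "\<exists>i\<le>dQ. c i \<noteq> 0" "(\<Sum>i\<le>dQ. c i * r ^ i) = 0"
    using V_dep[OF r] by blast
  define p where "p = (\<Sum>i\<le>dQ. monom (c i) i)"
  have cp: "coeff p n = (if n \<le> dQ then c n else 0)" for n unfolding p_def by (rule coeff_sum_monom)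
  have "p \<in> cpoly Fset" using c(1) sub_ringD(1)[OF F_R] by (intro cpolyI[of p]) (simp add: cp)
  moreover have "p \<noteq> 0" using c(2) cp by (metis coeff_0)
  moreover have "poly p r = 0" using c(3) by (simp add: p_def poly_sum poly_monom)
  ultimately show ?thesis by (rule V_inv_aux[OF r False])
qed

lemma E_V: "Eset \<subseteq> Vset"
proof
  fix z assume "z \<in> Eset"
  then obtain P R where r: "P \<in> P2" "R \<in> P2" "ev2 R f g \<noteq> 0" "z = ev2 P f g / ev2 R f g"
    unfolding Eset_def by blast
  have kV: "k \<subseteq> Vset"
  proof
    fix c assume "c \<in> k"
    then have "poly [:c:] f \<in> Fset" using sub_ringD(1)[OF kR] by (intro F_poly cpoly_const)
    then show "c \<in> Vset" using V_F by simp
  qed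
  have fV: "f \<in> Vset" using V_F[OF F_poly[OF Xk]] by simp
  have gV: "g \<in> Vset" using V_gpow[of 1] V_gd dQ_pos by (cases "dQ = 1") auto
  have ev: "ev2 P f g \<in> Vset" if "P \<in> P2" for P
    by (rule ev2_in_sub_ring[OF V_R kV that fV gV])
  have "z = ev2 P f g * inverse (ev2 R f g)" using r(4) by (simp add: divide_inverse)
  then show "z \<in> Vset" using ev r V_mult V_inv by simp
qed

lemma E_alg: assumes z: "z \<in> Eset" shows "\<exists>P. ann P z"
proof -
  obtain c where c: "\<forall>i\<le>dQ. c i \<in> Fset" "\<exists>i\<le>dQ. c i \<noteq> 0" "(\<Sum>i\<le>dQ. c i * z ^ i) = 0"
    using V_dep E_V z by blast
  have "\<forall>i. \<exists>pq. i \<le> dQ \<longrightarrow> fst pq \<in> cpoly k \<and> snd pq \<in> cpoly k \<and> snd pq \<noteq> 0 \<and> c i = poly (fst pq) f / poly (snd pq) f"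
    using c(1) unfolding Fset_def by fastforce
  then obtain pq where pq: "\<And>i. i \<le> dQ \<Longrightarrow> fst (pq i) \<in> cpoly k \<and> snd (pq i) \<in> cpoly k \<and> snd (pq i) \<noteq> 0 \<and> c i = poly (fst (pq i)) f / poly (snd (pq i)) f"
    by metis
  define pn where "pn i = fst (pq i)" for i
  define qn where "qn i = snd (pq i)" for i
  have pn: "i \<le> dQ \<Longrightarrow> pn i \<in> cpoly k" and qn: "i \<le> dQ \<Longrightarrow> qn i \<in> cpoly k" "i \<le> dQ \<Longrightarrow> qn i \<noteq> 0"
    and cq: "i \<le> dQ \<Longrightarrow> c i = poly (pn i) f / poly (qn i) f" for i using pq unfolding pn_def qn_def by auto
  have qf: "i \<le> dQ \<Longrightarrow> poly (qn i) f \<noteq> 0" for i using transc qn by blast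
  define cc where "cc i = pn i * (\<Prod>l\<in>{..dQ}-{i}. qn l)" for i
  define P where "P = (\<Sum>i\<le>dQ. monom (cc i) i)"
  have cP: "coeff P n = (if n \<le> dQ then cc n else 0)" for n unfolding P_def by (rule coeff_sum_monom)
  have ccK: "i \<le> dQ \<Longrightarrow> cc i \<in> cpoly k" for i
    unfolding cc_def using pn qn by (intro sub_ringD(4)[OF kPR] sub_ring_prod[OF kPR]) auto
  have "P \<in> P2" using ccK sub_ringD(1)[OF kPR] by (intro cpolyI[of P]) (simp add: cP)
  moreover have "P \<noteq> 0"
  proof -
    obtain i where i: "i \<le> dQ" "c i \<noteq> 0" using c(2) by blast
    then have "pn i \<noteq> 0" using cq by auto
    moreover have "(\<Prod>l\<in>{..dQ}-{i}. qn l) \<noteq> 0" using qn(2) by (simp add: prod_zero_iff)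
    ultimately have "coeff P i \<noteq> 0" using i by (simp add: cP cc_def)
    then show ?thesis by auto
  qed
  moreover have "ev2 P f z = 0"
  proof -
    have "poly (cc i) f = (\<Prod>l\<le>dQ. poly (qn l) f) * c i" if i: "i \<le> dQ" for i
    proof -
      have "(\<Prod>l\<le>dQ. poly (qn l) f) = poly (qn i) f * (\<Prod>l\<in>{..dQ}-{i}. poly (qn l) f)"
        using i by (simp add: prod.remove)
      then show ?thesis using cq[OF i] qf[OF i] by (simp add: cc_def poly_prod field_simps)
    qed
    then have "ev2 P f z = (\<Prod>l\<le>dQ. poly (qn l) f) * (\<Sum>i\<le>dQ. c i * z ^ i)"
      by (simp add: P_def ev2_sum sum_distrib_left mult.assoc)
    then show ?thesis using c(3) by simp
  qed
  ultimately show ?thesis unfolding ann_def by blast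
qed

end

definition Wr :: "'b::field_char_0 poly \<Rightarrow> 'b poly \<Rightarrow> 'b poly" where
  "Wr p q = [:0, 1:] * (pderiv p * q - p * pderiv q)"

lemma coeff_pderiv_mult_top:
  fixes p q :: "'b::field_char_0 poly"
  assumes "degree p + degree q \<ge> 1"
  shows "coeff (pderiv p * q) (degree p + degree q - 1) = of_nat (degree p) * lead_coeff p * lead_coeff q"
proof (cases "degree p = 0")
  case True
  then have "pderiv p = 0" by (simp add: pderiv_eq_0_iff)
  then show ?thesis using True by simp
next
  case False
  then have d: "degree (pderiv p) = degree p - 1" by (simp add: degree_pderiv)
  have "coeff (pderiv p * q) (degree p + degree q - 1) = coeff (pderiv p * q) (degree (pderiv p) + degree q)"
    using False d by (metis Nat.add_diff_assoc2 One_nat_def Suc_leI neq0_conv)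
  also have "\<dots> = lead_coeff (pderiv p) * lead_coeff q" by (rule coeff_mult_degree_sum)
  also have "lead_coeff (pderiv p) = of_nat (degree p) * lead_coeff p"
    using False d by (simp add: coeff_pderiv)
  finally show ?thesis by simp
qed

lemma degree_pderiv_mult_le:
  fixes p q :: "'b::field_char_0 poly"
  shows "degree (pderiv p * q) \<le> degree p + degree q - 1"
proof (cases "degree p = 0")
  case True
  then have "pderiv p = 0" by (simp add: pderiv_eq_0_iff)
  then show ?thesis by simp
next
  case False
  then show ?thesis using degree_mult_le[of "pderiv p" q] by (simp add: degree_pderiv)
qed

lemma Wr_degree: "degree (Wr p q) \<le> degree p + degree q" for p q :: "'b::field_char_0 poly"
proof -
  have "degree (pderiv p * q - p * pderiv q) \<le> degree p + degree q - 1"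
    using degree_pderiv_mult_le[of p q] degree_pderiv_mult_le[of q p]
    by (intro degree_diff_le) (auto simp: mult.commute add.commute)
  moreover have "degree (Wr p q) \<le> degree [:0,1::'b:] + degree (pderiv p * q - p * pderiv q)"
    unfolding Wr_def by (rule degree_mult_le)
  moreover have "degree [:0,1::'b:] = 1" by simp
  moreover have "Wr p q = 0" if "degree p + degree q = 0"
  proof -
    have "pderiv p = 0" "pderiv q = 0" using that by (simp_all add: pderiv_eq_0_iff)
    then show ?thesis by (simp add: Wr_def)
  qed
  ultimately show ?thesis by (cases "degree p + degree q = 0") auto
qed

lemma Wr_coeff: "coeff (Wr p q) (degree p + degree q) = (of_nat (degree p) - of_nat (degree q)) * lead_coeff p * lead_coeff q"
  for p q :: "'b::field_char_0 poly"
proof (cases "degree p + degree q = 0")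
  case True
  then have "pderiv p = 0" "pderiv q = 0" by (simp_all add: pderiv_eq_0_iff)
  then show ?thesis using True by (simp add: Wr_def)
next
  case False
  then obtain n where n: "degree p + degree q = Suc n" by (metis not0_implies_Suc)
  have "coeff (Wr p q) (degree p + degree q) = coeff (pderiv p * q - p * pderiv q) n"
    unfolding Wr_def n by simp
  also have "\<dots> = coeff (pderiv p * q) (degree p + degree q - 1) - coeff (pderiv q * p) (degree q + degree p - 1)"
    using n by (simp only: coeff_diff mult.commute[of p "pderiv q"] add.commute[of "degree q"]) simp
  also have "\<dots> = of_nat (degree p) * lead_coeff p * lead_coeff q - of_nat (degree q) * lead_coeff q * lead_coeff p"
  proof -
    have ge: "1 \<le> degree p + degree q" "1 \<le> degree q + degree p" using False by auto
    show ?thesis using coeff_pderiv_mult_top[OF ge(1)] coeff_pderiv_mult_top[OF ge(2)] by simp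
  qed
  also have "\<dots> = (of_nat (degree p) - of_nat (degree q)) * lead_coeff p * lead_coeff q"
    by (simp add: algebra_simps)
  finally show ?thesis .
qed

lemma Wr_diff: "Wr (p - r) q = Wr p q - Wr r q"
  by (simp add: Wr_def pderiv_diff algebra_simps)

lemma Wr_smult_self: "Wr (smult c q) q = 0"
  by (simp add: Wr_def pderiv_smult mult.commute)

lemma Wr_0: "Wr 0 q = 0" by (simp add: Wr_def)

lemma DL2:
  fixes p q :: "'b::field_char_0 poly"
  assumes "p \<noteq> 0" "q \<noteq> 0" "Wr p q = smult m (p * q)"
  shows "m = of_nat (degree p) - of_nat (degree q)"
proof -
  have "coeff (Wr p q) (degree p + degree q) = m * (lead_coeff p * lead_coeff q)"
    using assms(3) coeff_mult_degree_sum[of p q] by simp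
  then show ?thesis using Wr_coeff[of p q] assms(1,2) by (simp add: mult.assoc)
qed

lemma DL1:
  fixes p q :: "'b::field_char_0 poly"
  assumes q: "q \<noteq> 0" and c: "c \<noteq> 0"
  shows "Wr p q \<noteq> smult c (q * q)"
proof (induction "degree p" arbitrary: p rule: less_induct)
  case less
  show ?case
  proof
    assume eq: "Wr p q = smult c (q * q)"
    have rhs: "coeff (smult c (q * q)) (degree q + degree q) = c * lead_coeff q * lead_coeff q"
      using coeff_mult_degree_sum[of q q] by simp
    have drhs: "degree (smult c (q * q)) = degree q + degree q" using q c by (simp add: degree_mult_eq)
    show False
    proof (cases "p = 0")
      case True
      then show False using eq q c by (simp add: Wr_0)
    next
      case pnz: False
      consider "degree p > degree q" | "degree p < degree q" | "degree p = degree q" by linarith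
      then show False
      proof cases
        case 1
        have "coeff (Wr p q) (degree p + degree q) \<noteq> 0" using 1 pnz q by (simp add: Wr_coeff)
        moreover have "coeff (smult c (q * q)) (degree p + degree q) = 0"
          using 1 drhs by (intro coeff_eq_0) simp
        ultimately show False using eq by simp
      next
        case 2
        have "coeff (Wr p q) (degree q + degree q) = 0"
          using 2 Wr_degree[of p q] by (intro coeff_eq_0) simp
        then show False using eq rhs q c by simp
      next
        case 3
        define p1 where "p1 = p - smult (lead_coeff p / lead_coeff q) q"
        have W1: "Wr p1 q = Wr p q" unfolding p1_def by (simp add: Wr_diff Wr_smult_self)
        have c1: "coeff p1 (degree p) = 0" using 3 q by (simp add: p1_def)
        have d1: "degree p1 \<le> degree p" unfolding p1_def using 3
          by (intro degree_diff_le) (auto simp: degree_smult_le)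
        show False
        proof (cases "p1 = 0")
          case True
          then show False using W1 eq q c by (simp add: Wr_0)
        next
          case False
          have "degree p1 < degree p" by (rule degree_less_if_less_eqI[OF d1 c1 False])
          then show False using less.hyps eq W1 by metis
        qed
      qed
    qed
  qed
qed

lemma DL3:
  fixes p q :: "'b::field_char_0 poly"
  assumes q: "q \<noteq> 0" and W: "Wr p q = 0"
  shows "p = smult (lead_coeff p / lead_coeff q) q"
proof (cases "p = 0")
  case True then show ?thesis by simp
next
  case False
  have "(0::'b) = of_nat (degree p) - of_nat (degree q)" using DL2[OF False q, of 0] W by simp
  then have dpq: "degree p = degree q" by simp
  define p1 where "p1 = p - smult (lead_coeff p / lead_coeff q) q"
  have W1: "Wr p1 q = 0" unfolding p1_def using W by (simp add: Wr_diff Wr_smult_self)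
  have c1: "coeff p1 (degree q) = 0" using dpq q by (simp add: p1_def)
  have d1: "degree p1 \<le> degree q" unfolding p1_def using dpq
    by (intro degree_diff_le) (auto simp: degree_smult_le)
  show ?thesis
  proof (rule ccontr)
    assume "p \<noteq> smult (lead_coeff p / lead_coeff q) q"
    then have "p1 \<noteq> 0" by (simp add: p1_def)
    then have "degree p1 < degree q" by (rule degree_less_if_less_eqI[OF d1 c1])
    moreover have "(0::'b) = of_nat (degree p1) - of_nat (degree q)" using DL2[OF \<open>p1 \<noteq> 0\<close> q, of 0] W1 by simp
    ultimately show False by simp
  qed
qed

definition XdX :: "'b::idom poly poly \<Rightarrow> 'b poly poly" where
  "XdX P = smult [:0, 1:] (map_poly pderiv P)"

lemma ev2_XdX[simp]: "ev2 (XdX P) x y = x * ev2 (map_poly pderiv P) x y"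
  by (simp add: XdX_def)

lemma coeff_XdX: "coeff (XdX P) j = [:0, 1:] * pderiv (coeff P j)"
  by (simp add: XdX_def coeff_map_poly)

lemma degree_XdX: "degree (XdX P) \<le> degree P"
  by (rule degree_le) (simp add: coeff_XdX coeff_eq_0)

context gloc begin

lemma XdX_P2: "P \<in> P2 \<Longrightarrow> XdX P \<in> P2"
  unfolding XdX_def by (intro cpoly_smult[OF kPR] Xk mapX)

lemma Ef_ev2z:
  assumes z: "z \<in> Eset" and P: "P \<in> P2"
  shows "Ef (ev2 P f z) = ev2 (XdX P) f z + ev2 (pderiv P) f z * Ef z"
proof -
  have "Ef (ev2 P f z) = ev2 (map_poly (map_poly Ef) P) f z + ev2 (map_poly pderiv P) f z * Ef f + ev2 (pderiv P) f z * Ef z"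
    by (rule chain2[OF E_R Ef_der _ P E_f z]) (use E_k in blast)
  moreover have "map_poly (map_poly Ef) P = 0"
    by (rule map_kill[where T=k and d=Ef, OF Ef_k Ef0 P])
  ultimately show ?thesis using Ef_f by (simp add: mult.commute)
qed

lemma MinComb:
  assumes Pa: "ann P z" and Pm: "\<forall>R. ann R z \<longrightarrow> degree P \<le> degree R"
    and P': "P' \<in> P2" "degree P' \<le> degree P" "ev2 P' f z = 0"
  shows "smult (lead_coeff P) P' = smult (coeff P' (degree P)) P"
proof (rule ccontr)
  define R where "R = smult (lead_coeff P) P' - smult (coeff P' (degree P)) P"
  assume "smult (lead_coeff P) P' \<noteq> smult (coeff P' (degree P)) P"
  then have R0: "R \<noteq> 0" by (simp add: R_def)
  have PP: "P \<in> P2" "ev2 P f z = 0" using Pa unfolding ann_def by auto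
  have RP: "R \<in> P2" unfolding R_def using PP P'
    by (intro sub_ringD(6)[OF kP2R] cpoly_smult[OF kPR] cpolyD) auto
  have Rz: "ev2 R f z = 0" using PP P' by (simp add: R_def)
  have dR: "degree R \<le> degree P" unfolding R_def using P'
    by (intro degree_diff_le) (auto intro: order_trans[OF degree_smult_le])
  have cR: "coeff R (degree P) = 0" by (simp add: R_def mult.commute)
  have "degree R < degree P" by (rule degree_less_if_less_eqI[OF dR cR R0])
  moreover have "ann R z" unfolding ann_def using RP R0 Rz by auto
  ultimately show False using Pm by fastforce
qed

lemma min_of_E:
  assumes z: "z \<in> Eset"
  obtains P where "ann P z" "\<forall>R. ann R z \<longrightarrow> degree P \<le> degree R"
  using E_alg[OF z] min_ann by blast

lemma annD: "ann P z \<Longrightarrow> P \<in> P2" "ann P z \<Longrightarrow> P \<noteq> 0" "ann P z \<Longrightarrow> ev2 P f z = 0"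
  unfolding ann_def by auto

lemma NoLog: assumes z: "z \<in> Eset" and Ez: "Ef z = 1" shows False
proof -
  obtain P where Pa: "ann P z" and Pm: "\<forall>R. ann R z \<longrightarrow> degree P \<le> degree R"
    using min_of_E[OF z] by blast
  define n where "n = degree P"
  have n0: "n > 0" using ann_deg[OF Pa] by (simp add: n_def)
  then obtain m where nm: "n = Suc m" using not0_implies_Suc by blast
  have PP: "P \<in> P2" "P \<noteq> 0" "ev2 P f z = 0" using annD[OF Pa] by auto
  define P' where "P' = XdX P + pderiv P"
  have P'2: "P' \<in> P2" unfolding P'_def by (intro sub_ringD(3)[OF kP2R] XdX_P2 cpoly_pderiv[OF kPR] PP)
  have "ev2 P' f z = Ef (ev2 P f z)" using Ef_ev2z[OF z PP(1)] Ez by (simp add: P'_def)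
  then have ev: "ev2 P' f z = 0" using PP Ef0 by simp
  have dP': "degree P' \<le> degree P" unfolding P'_def
    by (intro degree_add_le degree_XdX) (simp add: degree_pderiv)
  have eq: "smult (lead_coeff P) P' = smult (coeff P' n) P"
    using MinComb[OF Pa Pm P'2 dP' ev] by (simp add: n_def)
  define q where "q = lead_coeff P"
  define p where "p = coeff P m"
  have q0: "q \<noteq> 0" using PP by (simp add: q_def)
  have cn: "coeff P' n = [:0,1:] * pderiv q"
    by (simp add: P'_def coeff_XdX coeff_pderiv q_def n_def coeff_eq_0)
  have cn1: "coeff P' m = [:0,1:] * pderiv p + of_nat n * q"
    using nm by (simp add: P'_def coeff_XdX coeff_pderiv p_def q_def n_def)
  have "q * coeff P' m = coeff P' n * p"
    using arg_cong[OF eq, of "\<lambda>R. coeff R m"] by (simp add: q_def p_def)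
  then have h: "q * ([:0,1:] * pderiv p + of_nat n * q) = [:0,1:] * pderiv q * p"
    by (simp only: cn cn1)
  have "Wr p q = - (of_nat n * (q * q))" unfolding Wr_def using h by algebra
  then have "Wr p q = smult (- of_nat n) (q * q)" by (simp add: of_nat_poly)
  moreover have "(- of_nat n :: 'a) \<noteq> 0" using n0 by simp
  ultimately show False using DL1[OF q0] by blast
qed

end

context gloc begin

lemma EZ: assumes z: "z \<in> Eset" and Ez: "Ef z = 0" shows "z \<in> k"
proof -
  obtain P where Pa: "ann P z" and Pm: "\<forall>R. ann R z \<longrightarrow> degree P \<le> degree R"
    using min_of_E[OF z] by blast
  define n where "n = degree P"
  have PP: "P \<in> P2" "P \<noteq> 0" "ev2 P f z = 0" using annD[OF Pa] by auto
  have P'2: "XdX P \<in> P2" by (rule XdX_P2[OF PP(1)])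
  have ev: "ev2 (XdX P) f z = 0" using Ef_ev2z[OF z PP(1)] Ez PP Ef0 by simp
  have eq: "smult (lead_coeff P) (XdX P) = smult (coeff (XdX P) n) P"
    using MinComb[OF Pa Pm P'2 degree_XdX ev] by (simp add: n_def)
  define q where "q = lead_coeff P"
  have q0: "q \<noteq> 0" using PP by (simp add: q_def)
  have qk: "q \<in> cpoly k" unfolding q_def by (rule cpolyD[OF PP(1)])
  define c where "c j = lead_coeff (coeff P j) / lead_coeff q" for j
  have cj: "coeff P j = smult (c j) q" for j
  proof -
    have "q * ([:0,1:] * pderiv (coeff P j)) = [:0,1:] * pderiv q * coeff P j"
      using arg_cong[OF eq, of "\<lambda>R. coeff R j"] by (simp add: coeff_XdX q_def n_def)
    then have "Wr (coeff P j) q = 0" unfolding Wr_def by algebra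
    then show ?thesis using DL3[OF q0] by (simp add: c_def)
  qed
  have ck: "c j \<in> k" for j unfolding c_def
    by (intro subfield_divide[OF ksf] cpolyD[OF qk] cpolyD[OF cpolyD[OF PP(1)]])
  define pc where "pc = (\<Sum>j\<le>n. monom (c j) j)"
  have cpc: "coeff pc j = (if j \<le> n then c j else 0)" for j unfolding pc_def by (rule coeff_sum_monom)
  have "pc \<in> cpoly k" using ck sub_ringD(1)[OF kR] by (intro cpolyI[of pc]) (simp add: cpc)
  moreover have "pc \<noteq> 0"
  proof -
    have "c n = 1" using q0 by (simp add: c_def q_def n_def)
    then show ?thesis using cpc[of n] by auto
  qed
  moreover have "poly pc z = 0"
  proof -
    have "0 = ev2 P f z" using PP by simp
    also have "\<dots> = (\<Sum>j\<le>n. poly (coeff P j) f * z ^ j)" by (simp add: ev2_altdef n_def)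
    also have "\<dots> = poly q f * poly pc z"
      by (simp add: cj pc_def poly_sum poly_monom sum_distrib_left algebra_simps)
    finally show ?thesis using transc[OF qk q0] by simp
  qed
  ultimately show ?thesis using in_k by blast
qed

lemma EL: assumes z: "z \<in> Eset" "z \<noteq> 0" and l: "l \<in> k" and Ez: "Ef z = l * z"
  shows "\<exists>n>0. \<exists>r::int. of_nat n * l = of_int r"
proof -
  obtain P where Pa: "ann P z" and Pm: "\<forall>R. ann R z \<longrightarrow> degree P \<le> degree R"
    using min_of_E[OF z(1)] by blast
  define n where "n = degree P"
  have n0: "n > 0" using ann_deg[OF Pa] by (simp add: n_def)
  then obtain m where nm: "n = Suc m" using not0_implies_Suc by blast
  have PP: "P \<in> P2" "P \<noteq> 0" "ev2 P f z = 0" using annD[OF Pa] by auto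
  define P' where "P' = XdX P + smult [:l:] (pCons 0 (pderiv P))"
  have lk: "[:l:] \<in> cpoly k" by (rule cpoly_const[OF sub_ringD(1)[OF kR] l])
  have P'2: "P' \<in> P2" unfolding P'_def using sub_ringD(1)[OF kPR]
    by (intro sub_ringD(3)[OF kP2R] XdX_P2 cpoly_smult[OF kPR] lk PP(1) iffD2[OF cpoly_pCons] conjI
        cpoly_pderiv[OF kPR])
  have "ev2 P' f z = Ef (ev2 P f z)" using Ef_ev2z[OF z(1) PP(1)] Ez by (simp add: P'_def algebra_simps)
  then have ev: "ev2 P' f z = 0" using PP Ef0 by simp
  have dP': "degree P' \<le> degree P" unfolding P'_def
  proof (intro degree_add_le degree_XdX order_trans[OF degree_smult_le])
    show "degree (pCons 0 (pderiv P)) \<le> degree P"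
      using n0 by (cases "pderiv P = 0") (auto simp: degree_pderiv n_def)
  qed
  have eq: "smult (lead_coeff P) P' = smult (coeff P' n) P"
    using MinComb[OF Pa Pm P'2 dP' ev] by (simp add: n_def)
  define q where "q = lead_coeff P"
  define p where "p = coeff P 0"
  have q0: "q \<noteq> 0" using PP by (simp add: q_def)
  have p0: "p \<noteq> 0"
  proof
    assume "p = 0"
    obtain a P1 where PP1: "P = pCons a P1" by (cases P) auto
    have a0: "a = 0" using \<open>p = 0\<close> PP1 by (simp add: p_def)
    have P10: "P1 \<noteq> 0" using PP(2) PP1 a0 by auto
    have "z * ev2 P1 f z = 0" using PP(3) PP1 a0 by simp
    then have "ev2 P1 f z = 0" using z(2) by simp
    moreover have "P1 \<in> P2" using PP(1) PP1 sub_ringD(1)[OF kPR] cpoly_pCons by blast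
    ultimately have "ann P1 z" using P10 unfolding ann_def by blast
    moreover have "degree P1 < degree P" using PP1 P10 by simp
    ultimately show False using Pm by fastforce
  qed
  have cn: "coeff P' n = [:0,1:] * pderiv q + [:l:] * (of_nat n * q)"
    using nm by (simp add: P'_def coeff_XdX coeff_pderiv q_def n_def)
  have c0: "coeff P' 0 = [:0,1:] * pderiv p"
    by (simp add: P'_def coeff_XdX p_def)
  have "q * coeff P' 0 = coeff P' n * p"
    using arg_cong[OF eq, of "\<lambda>R. coeff R 0"] by (simp add: q_def p_def n_def)
  then have h: "q * ([:0,1:] * pderiv p) = ([:0,1:] * pderiv q + [:l:] * (of_nat n * q)) * p"
    by (simp only: cn c0)
  have "Wr p q = [:l:] * of_nat n * (p * q)" unfolding Wr_def using h by algebra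
  then have "Wr p q = smult (l * of_nat n) (p * q)" by (simp add: of_nat_poly mult.commute)
  then have "l * of_nat n = of_nat (degree p) - of_nat (degree q)" by (rule DL2[OF p0 q0])
  then have "of_nat n * l = of_int (int (degree p) - int (degree q))" by (simp add: mult.commute)
  then show ?thesis using n0 by blast
qed

end

context gloc begin

lemma Ef_add: "x \<in> Eset \<Longrightarrow> y \<in> Eset \<Longrightarrow> Ef (x + y) = Ef x + Ef y"
  using is_derD(1)[OF Ef_der] .

lemma Ef_mult: "x \<in> Eset \<Longrightarrow> y \<in> Eset \<Longrightarrow> Ef (x * y) = x * Ef y + Ef x * y"
  using is_derD(2)[OF Ef_der] .

lemma Ef_kmult: "c \<in> k \<Longrightarrow> x \<in> Eset \<Longrightarrow> Ef (c * x) = c * Ef x"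
  using Ef_mult[OF E_k] Ef_k by simp

lemma Ef_diff: "x \<in> Eset \<Longrightarrow> y \<in> Eset \<Longrightarrow> Ef (x - y) = Ef x - Ef y"
  using der_diff[OF E_R Ef_der] .

lemma Ef_pow_eig:
  assumes x: "x \<in> Eset" and Ex: "Ef x = c * x"
  shows "Ef (x ^ m) = of_nat m * c * x ^ m"
proof (cases m)
  case 0 then show ?thesis using der_one[OF E_R Ef_der] by simp
next
  case (Suc m')
  have "Ef (x ^ Suc m') = of_nat (Suc m') * x ^ m' * Ef x" by (rule der_power[OF E_R Ef_der x])
  then show ?thesis using Suc Ex by (simp add: algebra_simps)
qed

lemma EV:
  assumes h: "h \<in> Eset" "h \<noteq> 0" and l: "l \<in> k" and Eh: "Ef h = l * h"
  shows "\<exists>n>0. \<exists>r::int. \<exists>b\<in>k. b \<noteq> 0 \<and> h ^ n = b * f powi r"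
proof -
  obtain n r where n: "n > 0" and nr: "of_nat n * l = of_int r" using EL[OF h l Eh] by blast
  have Ehn: "Ef (h ^ n) = of_int r * h ^ n" using Ef_pow_eig[OF h(1) Eh, of n] nr by (simp add: mult.assoc)
  have Efm: "Ef (f ^ m) = of_nat m * f ^ m" for m using Ef_pow_eig[OF E_f, of 1 m] Ef_f by simp
  have hnE: "h ^ n \<in> Eset" by (rule sub_ring_power[OF E_R h(1)])
  have fmE: "f ^ m \<in> Eset" for m by (rule sub_ring_power[OF E_R E_f])
  have fm0: "f ^ m \<noteq> 0" for m using f0 by simp
  show ?thesis
  proof (cases "r \<ge> 0")
    case True
    define m where "m = nat r"
    have rm: "(of_int r :: 'a) = of_nat m" using True by (simp add: m_def)
    define z where "z = h ^ n / f ^ m"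
    have zE: "z \<in> Eset" unfolding z_def by (rule E_div[OF hnE fmE])
    have "Ef z = (Ef (h ^ n) * f ^ m - h ^ n * Ef (f ^ m)) / (f ^ m)^2"
      unfolding z_def by (rule der_div[OF E_sf Ef_der hnE fmE fm0])
    also have "\<dots> = 0" unfolding Ehn Efm rm by simp
    finally have "z \<in> k" using EZ[OF zE] by simp
    moreover have "z \<noteq> 0" using h(2) f0 by (simp add: z_def)
    moreover have "h ^ n = z * f powi r" using True f0 by (simp add: z_def power_int_def m_def)
    ultimately show ?thesis using n by blast
  next
    case False
    define m where "m = nat (- r)"
    have rm: "(of_int r :: 'a) = - of_nat m" using False by (simp add: m_def)
    define z where "z = h ^ n * f ^ m"
    have zE: "z \<in> Eset" unfolding z_def by (rule E_mult[OF hnE fmE])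
    have "Ef z = h ^ n * Ef (f ^ m) + Ef (h ^ n) * f ^ m"
      unfolding z_def by (rule Ef_mult[OF hnE fmE])
    also have "\<dots> = 0" unfolding Ehn Efm rm by simp
    finally have "z \<in> k" using EZ[OF zE] by simp
    moreover have "z \<noteq> 0" using h(2) f0 by (simp add: z_def)
    moreover have "h ^ n = z * f powi r" using False f0
      by (simp add: z_def power_int_def m_def power_inverse field_simps)
    ultimately show ?thesis using n by blast
  qed
qed

lemma NoJordan:
  assumes u: "u \<in> Eset" and l: "l \<in> k" and Ev: "Ef (Ef u - l * u) = l * (Ef u - l * u)"
  shows "Ef u - l * u = 0"
proof (rule ccontr)
  define v where "v = Ef u - l * u"
  assume "Ef u - l * u \<noteq> 0"
  then have v0: "v \<noteq> 0" by (simp add: v_def)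
  have vE: "v \<in> Eset" unfolding v_def by (intro E_diff E_Ef u E_mult E_k l)
  have Ev': "Ef v = l * v" using Ev by (simp add: v_def)
  have Eu: "Ef u = v + l * u" by (simp add: v_def)
  have "Ef (u / v) = (Ef u * v - u * Ef v) / v^2" by (rule der_div[OF E_sf Ef_der u vE v0])
  also have "\<dots> = 1" unfolding Eu Ev' using v0 by (simp add: field_simps power2_eq_square)
  finally show False using NoLog[OF E_div[OF u vE]] by simp
qed

lemma Efpow_E: "z \<in> Eset \<Longrightarrow> (Ef ^^ i) z \<in> Eset"
  by (induction i) (auto intro: E_Ef)

definition opE :: "'a poly \<Rightarrow> 'a \<Rightarrow> 'a" where
  "opE p z = (\<Sum>i\<le>degree p. coeff p i * (Ef ^^ i) z)"

lemma opE_N: "degree p \<le> N \<Longrightarrow> opE p z = (\<Sum>i\<le>N. coeff p i * (Ef ^^ i) z)"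
proof -
  assume N: "degree p \<le> N"
  have "(\<Sum>i\<le>N. coeff p i * (Ef ^^ i) z) = (\<Sum>i\<le>degree p. coeff p i * (Ef ^^ i) z) + (\<Sum>i\<in>{degree p<..N}. coeff p i * (Ef ^^ i) z)"
    using N by (subst sum.union_disjoint[symmetric]) (auto intro!: sum.cong simp: ivl_disj_un)
  also have "(\<Sum>i\<in>{degree p<..N}. coeff p i * (Ef ^^ i) z) = 0" by (auto intro!: sum.neutral simp: coeff_eq_0)
  finally show ?thesis by (simp add: opE_def)
qed

lemma opE_E: "p \<in> cpoly k \<Longrightarrow> z \<in> Eset \<Longrightarrow> opE p z \<in> Eset"
  unfolding opE_def by (intro sub_ring_sum[OF E_R] E_mult E_k[OF cpolyD] Efpow_E) auto

lemma opE_pCons: "opE (pCons c p) z = c * z + opE p (Ef z)"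
proof -
  have "opE (pCons c p) z = (\<Sum>i\<le>Suc (degree p). coeff (pCons c p) i * (Ef ^^ i) z)"
    by (rule opE_N) (simp add: degree_pCons_le)
  also have "\<dots> = c * z + (\<Sum>i\<le>degree p. coeff p i * Ef ((Ef ^^ i) z))"
    by (subst sum.atMost_Suc_shift) simp
  also have "(\<Sum>i\<le>degree p. coeff p i * Ef ((Ef ^^ i) z)) = opE p (Ef z)"
    by (simp add: opE_def funpow_swap1)
  finally show ?thesis .
qed

lemma opE_0: "opE 0 z = 0" by (simp add: opE_def)

lemma opE_const: "opE [:c:] z = c * z" by (simp add: opE_def)

lemma Efpow_add: "x \<in> Eset \<Longrightarrow> y \<in> Eset \<Longrightarrow> (Ef ^^ i) (x + y) = (Ef ^^ i) x + (Ef ^^ i) y"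
  by (induction i) (auto simp: Ef_add Efpow_E)

lemma Efpow_kmult: "c \<in> k \<Longrightarrow> x \<in> Eset \<Longrightarrow> (Ef ^^ i) (c * x) = c * (Ef ^^ i) x"
  by (induction i) (auto simp: Ef_kmult Efpow_E)

lemma Efpow_diff: "x \<in> Eset \<Longrightarrow> y \<in> Eset \<Longrightarrow> (Ef ^^ i) (x - y) = (Ef ^^ i) x - (Ef ^^ i) y"
  by (induction i) (auto simp: Ef_diff Efpow_E)

lemma opE_add_right: "x \<in> Eset \<Longrightarrow> y \<in> Eset \<Longrightarrow> opE p (x + y) = opE p x + opE p y"
  by (simp add: opE_def Efpow_add sum.distrib algebra_simps)

lemma opE_diff_right: "x \<in> Eset \<Longrightarrow> y \<in> Eset \<Longrightarrow> opE p (x - y) = opE p x - opE p y"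
  by (simp add: opE_def Efpow_diff sum_subtractf algebra_simps)

lemma opE_kmult_right: "c \<in> k \<Longrightarrow> x \<in> Eset \<Longrightarrow> opE p (c * x) = c * opE p x"
  by (simp add: opE_def Efpow_kmult sum_distrib_left algebra_simps)

lemma opE_add: "opE (p + q) z = opE p z + opE q z"
proof -
  define N where "N = max (degree p) (degree q)"
  have "opE (p + q) z = (\<Sum>i\<le>N. coeff (p + q) i * (Ef ^^ i) z)"
    by (rule opE_N) (simp add: N_def degree_add_le)
  also have "\<dots> = (\<Sum>i\<le>N. coeff p i * (Ef ^^ i) z) + (\<Sum>i\<le>N. coeff q i * (Ef ^^ i) z)"
    by (simp add: sum.distrib algebra_simps)
  also have "\<dots> = opE p z + opE q z" using opE_N[of p N z] opE_N[of q N z] by (simp add: N_def)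
  finally show ?thesis .
qed

lemma opE_smult: "opE (smult c p) z = c * opE p z"
proof -
  have "opE (smult c p) z = (\<Sum>i\<le>degree p. coeff (smult c p) i * (Ef ^^ i) z)"
    by (rule opE_N) (simp add: degree_smult_le)
  then show ?thesis by (simp add: opE_def sum_distrib_left mult.assoc)
qed

lemma Ef_opE: "p \<in> cpoly k \<Longrightarrow> z \<in> Eset \<Longrightarrow> Ef (opE p z) = opE p (Ef z)"
proof -
  assume p: "p \<in> cpoly k" and z: "z \<in> Eset"
  have "Ef (opE p z) = (\<Sum>i\<le>degree p. Ef (coeff p i * (Ef ^^ i) z))"
    unfolding opE_def by (rule der_sum[OF E_R Ef_der]) (intro E_mult E_k cpolyD[OF p] Efpow_E z)
  also have "\<dots> = (\<Sum>i\<le>degree p. coeff p i * (Ef ^^ i) (Ef z))"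
    using p z by (simp add: Ef_kmult cpolyD Efpow_E funpow_swap1)
  finally show ?thesis by (simp add: opE_def)
qed

lemma opE_mult: "p \<in> cpoly k \<Longrightarrow> q \<in> cpoly k \<Longrightarrow> z \<in> Eset \<Longrightarrow> opE (p * q) z = opE p (opE q z)"
proof (induction p arbitrary: z)
  case 0 then show ?case by (simp add: opE_def)
next
  case (pCons c p)
  have c: "c \<in> k" and p: "p \<in> cpoly k" using pCons.prems(1) cpoly_pCons sub_ringD(1)[OF kR] by blast+
  have "opE (pCons c p * q) z = opE (smult c q + pCons 0 (p * q)) z" by simp
  also have "\<dots> = c * opE q z + opE (p * q) (Ef z)" by (simp add: opE_add opE_smult opE_pCons)
  also have "opE (p * q) (Ef z) = opE p (opE q (Ef z))" by (rule pCons.IH[OF p pCons.prems(2) E_Ef[OF pCons.prems(3)]])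
  also have "opE q (Ef z) = Ef (opE q z)" using Ef_opE[OF pCons.prems(2,3)] by simp
  finally show ?case by (simp add: opE_pCons)
qed

lemma opE_eig: assumes h: "h \<in> Eset" and l: "l \<in> k" and Eh: "Ef h = l * h" shows "opE p h = poly p l * h"
proof -
  have "(Ef ^^ i) h = l ^ i * h" for i
  proof (induction i)
    case (Suc i)
    have "(Ef ^^ Suc i) h = Ef (l ^ i * h)" using Suc by simp
    also have "\<dots> = l ^ i * Ef h" by (rule Ef_kmult[OF sub_ring_power[OF kR l] h])
    finally show ?case using Eh by (simp add: mult_ac)
  qed simp
  then show ?thesis by (simp add: opE_def poly_altdef sum_distrib_right sum_distrib_left algebra_simps)
qed

lemma opE_lin: "opE [:-l, 1:] z = Ef z - l * z"
  by (simp add: opE_pCons opE_const opE_0)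

end

context gloc begin

lemma lin_k: "l \<in> k \<Longrightarrow> [:-l, 1:] \<in> cpoly k"
  using sub_ringD(1,2,5)[OF kR] sub_ringD(1)[OF kPR] by (simp add: cpoly_pCons)

lemma DEC:
  "\<mu> \<in> cpoly k \<Longrightarrow> \<mu> \<noteq> 0 \<Longrightarrow> z \<in> Eset \<Longrightarrow> opE \<mu> z = 0 \<Longrightarrow>
    \<exists>hs. z = sum_list (map fst hs) \<and> (\<forall>p\<in>set hs. fst p \<in> Eset \<and> snd p \<in> k \<and> Ef (fst p) = snd p * fst p)"
proof (induction "degree \<mu>" arbitrary: \<mu> z rule: less_induct)
  case less
  show ?case
  proof (cases "degree \<mu> = 0")
    case True
    then obtain c where c: "\<mu> = [:c:]" using degree_eq_zeroE by blast
    then have "c \<noteq> 0" using less.prems by auto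
    then have "z = 0" using less.prems(4) c by (simp add: opE_const)
    then show ?thesis by (intro exI[of _ "[]"]) simp
  next
    case False
    then obtain l where l: "l \<in> k" "poly \<mu> l = 0"
      using k_closed less.prems(1) unfolding alg_closed_subfield_def cpoly_def by auto
    define \<nu> where "\<nu> = synthetic_div \<mu> l"
    have mn: "\<mu> = [:-l, 1:] * \<nu>" using synthetic_div_correct'[of l \<mu>] l(2) by (simp add: \<nu>_def)
    have nk: "\<nu> \<in> cpoly k" unfolding \<nu>_def by (rule synth_cpoly[OF kR l(1) less.prems(1)])
    have n0: "\<nu> \<noteq> 0" using mn less.prems(2) by auto
    have dn: "degree \<nu> < degree \<mu>" using False by (simp add: \<nu>_def degree_synthetic_div)
    define y where "y = opE \<nu> z"
    have yE: "y \<in> Eset" unfolding y_def by (rule opE_E[OF nk less.prems(3)])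
    have "opE [:-l, 1:] y = 0" using less.prems(4) opE_mult[OF lin_k[OF l(1)] nk less.prems(3)] mn
      by (simp add: y_def)
    then have Ey: "Ef y = l * y" by (simp add: opE_lin)
    show ?thesis
    proof (cases "poly \<nu> l = 0")
      case False
      have pk: "poly \<nu> l \<in> k" by (rule poly_in_sub_ring[OF kR order_refl nk l(1)])
      have ik: "inverse (poly \<nu> l) \<in> k" by (rule subfield_inverse[OF ksf pk])
      define h where "h = inverse (poly \<nu> l) * y"
      have hE: "h \<in> Eset" unfolding h_def by (intro E_mult E_k ik yE)
      have Eh: "Ef h = l * h" unfolding h_def using Ef_kmult[OF ik yE] Ey by (simp add: mult_ac)
      have "opE \<nu> h = poly \<nu> l * h" by (rule opE_eig[OF hE l(1) Eh])
      also have "\<dots> = y" using False by (simp add: h_def)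
      finally have "opE \<nu> (z - h) = 0" using opE_diff_right[OF less.prems(3) hE] by (simp add: y_def)
      then obtain hs where hs: "z - h = sum_list (map fst hs)"
        "\<forall>p\<in>set hs. fst p \<in> Eset \<and> snd p \<in> k \<and> Ef (fst p) = snd p * fst p"
        using less.hyps[OF dn nk n0 E_diff[OF less.prems(3) hE]] by blast
      show ?thesis using hs hE l(1) Eh
        by (intro exI[of _ "(h, l) # hs"]) (auto simp: algebra_simps)
    next
      case True
      define \<rho> where "\<rho> = synthetic_div \<nu> l"
      have nr: "\<nu> = [:-l, 1:] * \<rho>" using synthetic_div_correct'[of l \<nu>] True by (simp add: \<rho>_def)
      have rk: "\<rho> \<in> cpoly k" unfolding \<rho>_def by (rule synth_cpoly[OF kR l(1) nk])
      define u where "u = opE \<rho> z"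
      have uE: "u \<in> Eset" unfolding u_def by (rule opE_E[OF rk less.prems(3)])
      have yu: "y = Ef u - l * u" unfolding y_def u_def nr
        using opE_mult[OF lin_k[OF l(1)] rk less.prems(3)] by (simp add: opE_lin)
      have "y = 0" using NoJordan[OF uE l(1)] Ey yu by simp
      then show ?thesis using less.hyps[OF dn nk n0 less.prems(3)] by (simp add: y_def)
    qed
  qed
qed

end

context base begin

lemma Dpow_K: "x \<in> K \<Longrightarrow> (D ^^ i) x \<in> K"
  by (induction i) (auto intro: DK)

lemma Wronski:
  fixes c :: "nat \<Rightarrow> 'a" and y :: "nat \<Rightarrow> 'a"
  assumes ck: "\<forall>i\<le>m. c i \<in> k" and cm: "c m \<noteq> 0"
    and yK: "\<forall>j\<le>m. y j \<in> K" and ysol: "\<forall>j\<le>m. (\<Sum>i\<le>m. c i * (D ^^ i) (y j)) = 0"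
  shows "\<exists>\<gamma>. (\<forall>j\<le>m. \<gamma> j \<in> k) \<and> (\<exists>j\<le>m. \<gamma> j \<noteq> 0) \<and> (\<Sum>j\<le>m. \<gamma> j * y j) = 0"
proof (cases "m = 0")
  case True
  then have "c 0 * y 0 = 0" using ysol by simp
  then have "y 0 = 0" using cm True by simp
  then show ?thesis using True sub_ringD(2)[OF kR] by (intro exI[of _ "\<lambda>_. 1"]) auto
next
  case False
  note KR1 = sub_ringD[OF KR]
  define Rel where "Rel \<alpha> \<longleftrightarrow> (\<forall>j\<le>m. \<alpha> j \<in> K) \<and> (\<exists>j\<le>m. \<alpha> j \<noteq> 0) \<and>
      (\<forall>i<m. (\<Sum>j\<le>m. \<alpha> j * (D ^^ i) (y j)) = 0)" for \<alpha>
  define supp where "supp \<alpha> = {j. j \<le> m \<and> \<alpha> j \<noteq> 0}" for \<alpha> :: "nat \<Rightarrow> 'a"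
  have MK: "(D ^^ i) (y j) \<in> K" if "j \<le> m" for i j using Dpow_K yK that by auto
  have "\<exists>\<alpha>. Rel \<alpha>"
  proof -
    obtain \<alpha> where "\<forall>j\<in>{..m}. \<alpha> j \<in> K" "\<exists>j\<in>{..m}. \<alpha> j \<noteq> 0" "\<forall>i\<in>{..<m}. (\<Sum>j\<in>{..m}. \<alpha> j * (D ^^ i) (y j)) = 0"
      using LA[OF Ksf, of "{..<m}" "{..m}" "\<lambda>j i. (D ^^ i) (y j)"] MK by auto
    then show ?thesis unfolding Rel_def by auto
  qed
  then obtain n where "\<exists>\<alpha>. Rel \<alpha> \<and> card (supp \<alpha>) = n" "\<forall>n'. (\<exists>\<alpha>. Rel \<alpha> \<and> card (supp \<alpha>) = n') \<longrightarrow> n \<le> n'"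
    using ex_has_least_nat[of "\<lambda>n. \<exists>\<alpha>. Rel \<alpha> \<and> card (supp \<alpha>) = n" _ id] by (metis id_apply)
  then obtain \<alpha> where \<alpha>: "Rel \<alpha>" and minim: "\<And>\<alpha>'. Rel \<alpha>' \<Longrightarrow> card (supp \<alpha>) \<le> card (supp \<alpha>')" by metis
  obtain j0 where j0: "j0 \<le> m" "\<alpha> j0 \<noteq> 0" using \<alpha> unfolding Rel_def by blast
  define \<beta> where "\<beta> j = \<alpha> j / \<alpha> j0" for j
  have \<beta>K: "\<beta> j \<in> K" if "j \<le> m" for j using \<alpha> that j0 unfolding \<beta>_def Rel_def by (auto intro: subfield_divide[OF Ksf])
  have \<beta>j0: "\<beta> j0 = 1" using j0 by (simp add: \<beta>_def)
  have \<beta>rel: "(\<Sum>j\<le>m. \<beta> j * (D ^^ i) (y j)) = 0" if "i < m" for i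
  proof -
    have "(\<Sum>j\<le>m. \<beta> j * (D ^^ i) (y j)) = (\<Sum>j\<le>m. \<alpha> j * (D ^^ i) (y j)) / \<alpha> j0"
      by (simp add: \<beta>_def sum_divide_distrib)
    then show ?thesis using \<alpha> that unfolding Rel_def by simp
  qed
  have supp\<beta>: "supp \<beta> = supp \<alpha>" using j0 by (auto simp: supp_def \<beta>_def)
  have Dm: "(D ^^ m) (y j) = - (\<Sum>l<m. c l * (D ^^ l) (y j)) / c m" if "j \<le> m" for j
  proof -
    have "0 = (\<Sum>l<m. c l * (D ^^ l) (y j)) + c m * (D ^^ m) (y j)"
      using ysol that by (simp add: lessThan_Suc_atMost[symmetric])
    then show ?thesis using cm by (simp add: field_simps eq_neg_iff_add_eq_0 add.commute)
  qed
  have D\<beta>rel: "(\<Sum>j\<le>m. D (\<beta> j) * (D ^^ i) (y j)) = 0" if i: "i < m" for i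
  proof -
    have "0 = D (\<Sum>j\<le>m. \<beta> j * (D ^^ i) (y j))" using \<beta>rel[OF i] der_zero[OF KR Kd] by simp
    also have "\<dots> = (\<Sum>j\<le>m. D (\<beta> j * (D ^^ i) (y j)))"
      by (rule der_sum[OF KR Kd]) (auto intro: KR1 \<beta>K MK)
    also have "\<dots> = (\<Sum>j\<le>m. \<beta> j * (D ^^ Suc i) (y j)) + (\<Sum>j\<le>m. D (\<beta> j) * (D ^^ i) (y j))"
      by (simp add: is_derD(2)[OF Kd \<beta>K MK] sum.distrib)
    also have "(\<Sum>j\<le>m. \<beta> j * (D ^^ Suc i) (y j)) = 0"
    proof (cases "Suc i < m")
      case True then show ?thesis using \<beta>rel by blast
    next
      case False
      then have im: "Suc i = m" using i by simp
      have "(\<Sum>j\<le>m. \<beta> j * (D ^^ m) (y j)) = (\<Sum>j\<le>m. \<beta> j * (- (\<Sum>l<m. c l * (D ^^ l) (y j)) / c m))"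
        by (rule sum.cong) (simp_all add: Dm)
      also have "\<dots> = - (\<Sum>l<m. c l * (\<Sum>j\<le>m. \<beta> j * (D ^^ l) (y j))) / c m"
        by (simp add: sum_divide_distrib sum_distrib_left sum_negf algebra_simps sum.swap[of _ "{..m}"])
      also have "\<dots> = 0" using \<beta>rel by simp
      finally show ?thesis using im by simp
    qed
    finally show ?thesis by simp
  qed
  have D\<beta>0: "D (\<beta> j) = 0" if "j \<le> m" for j
  proof (rule ccontr)
    assume nz: "D (\<beta> j) \<noteq> 0"
    have "Rel (\<lambda>j. D (\<beta> j))" unfolding Rel_def using nz that D\<beta>rel \<beta>K DK by blast
    then have "card (supp \<alpha>) \<le> card (supp (\<lambda>j. D (\<beta> j)))" by (rule minim)
    moreover have "supp (\<lambda>j. D (\<beta> j)) \<subseteq> supp \<beta> - {j0}"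
      using \<beta>j0 der_one[OF KR Kd] der_zero[OF KR Kd] by (auto simp: supp_def)
    moreover have "j0 \<in> supp \<beta>" using j0 \<beta>j0 by (simp add: supp_def)
    moreover have "finite (supp \<beta>)" by (simp add: supp_def)
    ultimately have "card (supp \<alpha>) < card (supp \<alpha>)" unfolding supp\<beta>
      by (metis card_Diff1_less card_mono finite_Diff le_less_trans supp\<beta>)
    then show False by simp
  qed
  have "(\<Sum>j\<le>m. \<beta> j * y j) = 0" using \<beta>rel[of 0] False by simp
  moreover have "\<forall>j\<le>m. \<beta> j \<in> k" using D\<beta>0 \<beta>K constsk by blast
  moreover have "\<exists>j\<le>m. \<beta> j \<noteq> 0" using j0 \<beta>j0 by auto
  ultimately show ?thesis by blast
qed

end

lemma sub_ring_sum_list: "sub_ring S \<Longrightarrow> (\<And>x. x \<in> set xs \<Longrightarrow> x \<in> S) \<Longrightarrow> sum_list xs \<in> S"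
  by (induction xs) (auto intro: sub_ringD)

lemma dvd_prod_list_nat: "x \<in> set xs \<Longrightarrow> (x::nat) dvd prod_list xs"
  by (induction xs) auto

lemma prod_list_pos: "(\<And>x. x \<in> set xs \<Longrightarrow> (x::nat) > 0) \<Longrightarrow> prod_list xs > 0"
  by (induction xs) auto

lemma laurent_of_list:
  fixes cc :: "'b \<Rightarrow> 'a::field" and ee :: "'b \<Rightarrow> int"
  assumes "\<forall>p\<in>set hs. \<bar>ee p\<bar> \<le> int N"
  shows "(\<Sum>p\<leftarrow>hs. cc p * \<theta> powi ee p) =
    (\<Sum>i\<in>{-int N..int N}. (\<Sum>p\<leftarrow>filter (\<lambda>p. ee p = i) hs. cc p) * \<theta> powi i)"
  using assms
proof (induction hs)
  case Nil then show ?case by simp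
next
  case (Cons p hs)
  have "(\<Sum>i\<in>{-int N..int N}. (\<Sum>q\<leftarrow>filter (\<lambda>q. ee q = i) (p # hs). cc q) * \<theta> powi i)
      = (\<Sum>i\<in>{-int N..int N}. (if ee p = i then cc p * \<theta> powi i else 0)) +
        (\<Sum>i\<in>{-int N..int N}. (\<Sum>q\<leftarrow>filter (\<lambda>q. ee q = i) hs. cc q) * \<theta> powi i)"
  proof -
    have pt: "(\<Sum>q\<leftarrow>filter (\<lambda>q. ee q = i) (p # hs). cc q) * \<theta> powi i =
      (if ee p = i then cc p * \<theta> powi i else 0) + (\<Sum>q\<leftarrow>filter (\<lambda>q. ee q = i) hs. cc q) * \<theta> powi i" for i
      by (simp add: algebra_simps)
    show ?thesis by (simp only: pt sum.distrib)
  qed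
  also have "(\<Sum>i\<in>{-int N..int N}. (if ee p = i then cc p * \<theta> powi i else 0)) = cc p * \<theta> powi ee p"
    using Cons.prems by (simp add: sum.delta' abs_le_iff)
  finally show ?case using Cons by simp
qed

context gloc begin

lemma Efpow0: "(Ef ^^ j) 0 = 0" by (induction j) (simp_all add: Ef0)

lemma Efpow_sum: "(\<And>i. i \<in> A \<Longrightarrow> c i \<in> k \<and> x i \<in> Eset) \<Longrightarrow>
    (Ef ^^ j) (\<Sum>i\<in>A. c i * x i) = (\<Sum>i\<in>A. c i * (Ef ^^ j) (x i))"
proof (induction A rule: infinite_finite_induct)
  case (insert a F)
  have ce: "c i \<in> Eset" "x i \<in> Eset" if "i \<in> insert a F" for i using insert.prems that E_k by blast+
  have s: "(\<Sum>i\<in>F. c i * x i) \<in> Eset" using ce by (intro sub_ring_sum[OF E_R] E_mult) auto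
  have a: "c a * x a \<in> Eset" using ce by (intro E_mult) auto
  show ?case using insert Efpow_add[OF a s] Efpow_kmult by simp
qed (simp_all add: Efpow0)

lemma D_Efpow: "z \<in> Eset \<Longrightarrow> D ((Ef ^^ j) z) = (Ef ^^ j) (D z)"
proof (induction j arbitrary: z)
  case (Suc j)
  have "D ((Ef ^^ Suc j) z) = D (Ef ((Ef ^^ j) z))" by simp
  also have "\<dots> = Ef (D ((Ef ^^ j) z))" by (rule commute[OF Efpow_E[OF Suc.prems]])
  also have "\<dots> = (Ef ^^ Suc j) (D z)" using Suc by simp
  finally show ?case .
qed simp

lemma Dpow_E: "z \<in> Eset \<Longrightarrow> (D ^^ i) z \<in> Eset"
  by (induction i) (auto intro: D_E)

lemma Dpow_Efpow: "z \<in> Eset \<Longrightarrow> (D ^^ i) ((Ef ^^ j) z) = (Ef ^^ j) ((D ^^ i) z)"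
proof (induction i)
  case (Suc i)
  then show ?case using D_Efpow[OF Dpow_E[OF Suc.prems]] by simp
qed simp

lemma forward:
  fixes c :: "nat \<Rightarrow> 'a"
  assumes ck: "\<forall>i\<le>m. c i \<in> k" and cm: "c m \<noteq> 0" and gsol: "(\<Sum>i\<le>m. c i * (D ^^ i) g) = 0"
  shows "\<exists>\<theta> (n::int). algebraic_over K \<theta> \<and> \<theta> \<noteq> 0 \<and> f = \<theta> powi n \<and> in_laurent k \<theta> g"
proof -
  define y where "y j = (Ef ^^ j) g" for j
  have yE: "y j \<in> Eset" for j unfolding y_def by (rule Efpow_E[OF E_g])
  have ysol: "(\<Sum>i\<le>m. c i * (D ^^ i) (y j)) = 0" for j
  proof -
    have "(\<Sum>i\<le>m. c i * (D ^^ i) (y j)) = (\<Sum>i\<le>m. c i * (Ef ^^ j) ((D ^^ i) g))"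
      by (simp add: y_def Dpow_Efpow[OF E_g])
    also have "\<dots> = (Ef ^^ j) (\<Sum>i\<le>m. c i * (D ^^ i) g)"
      by (rule Efpow_sum[symmetric]) (use ck Dpow_E[OF E_g] in auto)
    finally show ?thesis using gsol Efpow0 by simp
  qed
  obtain \<gamma> where \<gamma>: "\<forall>j\<le>m. \<gamma> j \<in> k" "\<exists>j\<le>m. \<gamma> j \<noteq> 0" "(\<Sum>j\<le>m. \<gamma> j * y j) = 0"
    using Wronski[OF ck cm, of y] yE E_K ysol by blast
  define \<mu> where "\<mu> = (\<Sum>j\<le>m. monom (\<gamma> j) j)"
  have c\<mu>: "coeff \<mu> j = (if j \<le> m then \<gamma> j else 0)" for j unfolding \<mu>_def by (rule coeff_sum_monom)
  have \<mu>k: "\<mu> \<in> cpoly k" using \<gamma>(1) sub_ringD(1)[OF kR] by (intro cpolyI[of \<mu>]) (simp add: c\<mu>)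
  have \<mu>0: "\<mu> \<noteq> 0" using \<gamma>(2) c\<mu> by (metis coeff_0)
  have dm: "degree \<mu> \<le> m" by (rule degree_le) (simp add: c\<mu>)
  have "opE \<mu> g = (\<Sum>j\<le>m. coeff \<mu> j * (Ef ^^ j) g)" by (rule opE_N[OF dm])
  also have "\<dots> = 0" using \<gamma>(3) by (simp add: c\<mu> y_def)
  finally obtain hs where hs: "g = sum_list (map fst hs)"
    "\<forall>p\<in>set hs. fst p \<in> Eset \<and> snd p \<in> k \<and> Ef (fst p) = snd p * fst p"
    using DEC[OF \<mu>k \<mu>0 E_g] by blast
  have "\<forall>p\<in>set hs. \<exists>n r b. n > 0 \<and> (fst p \<noteq> 0 \<longrightarrow> b \<in> k \<and> fst p ^ n = b * f powi r)"
  proof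
    fix p assume p: "p \<in> set hs"
    show "\<exists>n r b. n > 0 \<and> (fst p \<noteq> 0 \<longrightarrow> b \<in> k \<and> fst p ^ n = b * f powi r)"
    proof (cases "fst p = 0")
      case True then show ?thesis by (intro exI[of _ 1]) auto
    next
      case False
      then show ?thesis using EV[of "fst p" "snd p"] hs(2) p by blast
    qed
  qed
  then obtain nn rr bb where nrb: "\<And>p. p \<in> set hs \<Longrightarrow> nn p > 0 \<and> (fst p \<noteq> 0 \<longrightarrow> bb p \<in> k \<and> fst p ^ nn p = bb p * f powi rr p)"
    by metis
  define M where "M = prod_list (map nn hs)"
  have M0: "M > 0" unfolding M_def using nrb by (intro prod_list_pos) auto
  have Mdvd: "nn p dvd M" if "p \<in> set hs" for p unfolding M_def using that by (intro dvd_prod_list_nat) simp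
  define pm where "pm = monom (1::'a) M + [:- f:]"
  have dpm: "degree pm = M"
  proof -
    have "degree (monom (1::'a) M + [:- f:]) = M" using M0 by (subst degree_add_eq_left) (simp_all add: degree_monom_eq)
    then show ?thesis by (simp only: pm_def)
  qed
  obtain \<theta> where th: "poly pm \<theta> = 0" using alg_closed_imp_poly_has_root[of pm] dpm M0 by auto
  have thM: "\<theta> ^ M = f" using th by (simp add: pm_def poly_monom)
  have th0: "\<theta> \<noteq> 0" using thM f0 M0 by auto
  have alg: "algebraic_over K \<theta>"
    unfolding algebraic_over_def
  proof (intro exI[of _ pm] conjI allI)
    show "pm \<noteq> 0" using dpm M0 by auto
    show "poly pm \<theta> = 0" by (rule th)
    fix i show "coeff pm i \<in> K" using fK sub_ringD(1,2,5,6)[OF KR]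
      by (simp add: pm_def coeff_monom coeff_pCons split: nat.splits)
  qed
  define ee where "ee p = (if fst p = 0 then 0 else rr p * int (M div nn p))" for p
  define cc where "cc p = fst p / \<theta> powi ee p" for p
  have rep: "fst p = cc p * \<theta> powi ee p" for p
    using th0 by (simp add: cc_def power_int_not_zero)
  have cck: "cc p \<in> k" if p: "p \<in> set hs" for p
  proof (cases "fst p = 0")
    case True then show ?thesis using sub_ringD(1)[OF kR] by (simp add: cc_def)
  next
    case False
    have n: "nn p > 0" and b: "bb p \<in> k" and hb: "fst p ^ nn p = bb p * f powi rr p" using nrb[OF p] False by auto
    have Me: "int M = int (M div nn p) * int (nn p)" using Mdvd[OF p] by (simp flip: of_nat_mult)
    have "cc p ^ nn p = fst p ^ nn p / (\<theta> powi ee p) ^ nn p" by (simp add: cc_def power_divide)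
    also have "(\<theta> powi ee p) ^ nn p = (\<theta> ^ M) powi rr p"
      using False Me by (simp add: ee_def power_int_power' power_int_power mult_ac)
    also have "fst p ^ nn p / (\<theta> ^ M) powi rr p = bb p"
      using hb thM f0 by (simp add: power_int_not_zero)
    finally have cb: "cc p ^ nn p = bb p" .
    define q where "q = monom (1::'a) (nn p) - [:bb p:]"
    have "q \<in> cpoly k" unfolding q_def using b
      by (intro sub_ringD(6)[OF kPR] cpoly_monom cpoly_const sub_ringD(1,2)[OF kR])
    moreover have "q \<noteq> 0"
    proof -
      obtain n' where "nn p = Suc n'" using n not0_implies_Suc by blast
      then have "coeff q (nn p) = 1" by (simp add: q_def)
      then show ?thesis by auto
    qed
    moreover have "poly q (cc p) = 0" using cb by (simp add: q_def poly_monom)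
    ultimately show ?thesis using in_k by blast
  qed
  define N where "N = sum_list (map (\<lambda>p. nat \<bar>ee p\<bar>) hs)"
  have eN: "\<forall>p\<in>set hs. \<bar>ee p\<bar> \<le> int N"
  proof
    fix p assume "p \<in> set hs"
    then have "nat \<bar>ee p\<bar> \<le> N" unfolding N_def by (intro member_le_sum_list) auto
    then show "\<bar>ee p\<bar> \<le> int N" by simp
  qed
  have "g = (\<Sum>p\<leftarrow>hs. cc p * \<theta> powi ee p)" unfolding hs(1) by (simp add: rep[symmetric] comp_def)
  also have "\<dots> = (\<Sum>i\<in>{-int N..int N}. (\<Sum>p\<leftarrow>filter (\<lambda>p. ee p = i) hs. cc p) * \<theta> powi i)"
    by (rule laurent_of_list[OF eN])
  finally have "in_laurent k \<theta> g" unfolding in_laurent_def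
    using cck by (intro exI[of _ N] exI[of _ "\<lambda>i. (\<Sum>p\<leftarrow>filter (\<lambda>p. ee p = i) hs. cc p)"] conjI ballI)
      (auto intro!: sub_ring_sum_list[OF kR])
  moreover have "f = \<theta> powi int M" using thM by simp
  ultimately show ?thesis using alg th0 by blast
qed

end

lemma poly_N: "degree p \<le> B \<Longrightarrow> poly p x = (\<Sum>t\<le>B. coeff p t * x ^ t)" for p :: "'b::comm_semiring_1 poly"
proof -
  assume B: "degree p \<le> B"
  have "(\<Sum>t\<le>B. coeff p t * x ^ t) = (\<Sum>t\<le>degree p. coeff p t * x ^ t) + (\<Sum>t\<in>{degree p<..B}. coeff p t * x ^ t)"
    using B by (subst sum.union_disjoint[symmetric]) (auto intro!: sum.cong simp: ivl_disj_un)
  also have "(\<Sum>t\<in>{degree p<..B}. coeff p t * x ^ t) = 0" by (auto intro!: sum.neutral simp: coeff_eq_0)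
  finally show ?thesis by (simp add: poly_altdef)
qed

lemma laurent_inverse:
  assumes L: "in_laurent k \<theta> g"
  shows "in_laurent k (inverse \<theta>) g"
proof -
  obtain N c where c: "\<forall>i\<in>{-int N..int N}. c i \<in> k" "g = (\<Sum>i\<in>{-int N..int N}. c i * \<theta> powi i)"
    using L unfolding in_laurent_def by blast
  have "g = (\<Sum>i\<in>{-int N..int N}. c (- i) * \<theta> powi (- i))"
    unfolding c(2) by (rule sum.reindex_bij_witness[of _ uminus uminus]) auto
  also have "\<dots> = (\<Sum>i\<in>{-int N..int N}. c (- i) * (inverse \<theta>) powi i)"
    by (simp add: power_int_minus power_int_inverse)
  finally show ?thesis unfolding in_laurent_def using c(1)
    by (intro exI[of _ N] exI[of _ "\<lambda>i. c (- i)"]) auto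
qed

context base begin

lemma backward:
  assumes th0: "\<theta> \<noteq> 0" and fth: "f = \<theta> powi n" and L: "in_laurent k \<theta> g"
  shows "alg_dependent2 k f g"
proof -
  have n0: "n \<noteq> 0" using fth fk sub_ringD(2)[OF kR] by auto
  obtain \<theta>' m where th': "\<theta>' \<noteq> 0" "m > 0" "f = \<theta>' ^ m" "in_laurent k \<theta>' g"
  proof (cases "n > 0")
    case True
    then show ?thesis using that[of \<theta> "nat n"] th0 fth L by (simp add: power_int_def)
  next
    case False
    then show ?thesis using that[of "inverse \<theta>" "nat (- n)"] th0 fth n0 laurent_inverse[OF L]
      by (simp add: power_int_def)
  qed
  obtain N c where c: "\<forall>i\<in>{-int N..int N}. c i \<in> k" "g = (\<Sum>i\<in>{-int N..int N}. c i * \<theta>' powi i)"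
    using th'(4) unfolding in_laurent_def by blast
  define G where "G = (\<Sum>i\<in>{-int N..int N}. monom (c i) (nat (i + int N)))"
  have cG: "coeff G t = (\<Sum>i\<in>{-int N..int N}. if nat (i + int N) = t then c i else 0)" for t
    by (simp add: G_def coeff_sum coeff_monom)
  have Gk: "G \<in> cpoly k"
    using c(1) sub_ringD(1)[OF kR] by (intro cpolyI[of G]) (auto simp: cG intro!: sub_ring_sum[OF kR])
  have dG: "degree G \<le> 2 * N"
    by (rule degree_le) (auto simp: cG intro!: sum.neutral)
  have pG: "poly G \<theta>' = \<theta>' ^ N * g"
  proof -
    have "poly G \<theta>' = (\<Sum>i\<in>{-int N..int N}. c i * \<theta>' ^ nat (i + int N))"
      by (simp add: G_def poly_sum poly_monom)
    also have "\<dots> = (\<Sum>i\<in>{-int N..int N}. \<theta>' ^ N * (c i * \<theta>' powi i))"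
    proof (rule sum.cong)
      fix i assume i: "i \<in> {-int N..int N}"
      have "\<theta>' ^ nat (i + int N) = \<theta>' powi (i + int N)" using i by (simp add: power_int_nonneg_exp)
      also have "\<dots> = \<theta>' powi i * \<theta>' ^ N" using th'(1) by (simp add: power_int_add)
      finally show "c i * \<theta>' ^ nat (i + int N) = \<theta>' ^ N * (c i * \<theta>' powi i)" by simp
    qed simp
    also have "\<dots> = \<theta>' ^ N * g" by (simp add: c(2) sum_distrib_left)
    finally show ?thesis .
  qed
  define Lh where "Lh = m + 3 * N"
  have L0: "Lh > 0" using th'(2) by (simp add: Lh_def)
  define Pij where "Pij ij = monom (1::'a) (m * fst ij + N * (Lh - snd ij)) * G ^ snd ij" for ij
  define I where "I = {..Lh} \<times> {..Lh}"
  have Pk: "Pij ij \<in> cpoly k" for ij unfolding Pij_def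
    by (intro sub_ringD(4)[OF kPR] cpoly_monom sub_ringD(1,2)[OF kR] sub_ring_power[OF kPR Gk])
  have dP: "degree (Pij ij) \<le> Lh * Lh" if hI: "ij \<in> I" for ij
  proof -
    obtain i j where ij: "ij = (i, j)" "i \<le> Lh" "j \<le> Lh" using hI unfolding I_def by (cases ij) auto
    have "degree (Pij ij) \<le> degree (monom (1::'a) (m * i + N * (Lh - j))) + degree (G ^ j)"
      unfolding Pij_def ij(1) by (simp add: degree_mult_le)
    moreover have "degree (monom (1::'a) (m * i + N * (Lh - j))) \<le> m * i + N * (Lh - j)" by (rule degree_monom_le)
    moreover have "degree (G ^ j) \<le> j * degree G" using degree_power_le[of G j] by (simp add: mult.commute)
    ultimately have "degree (Pij ij) \<le> (m * i + N * (Lh - j)) + j * degree G" by linarith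
    also have "\<dots> \<le> (m * i + N * (Lh - j)) + j * (2 * N)" using dG by simp
    also have "\<dots> \<le> m * Lh + N * Lh + N * Lh + N * Lh"
    proof -
      have "N * (Lh - j) + j * (2 * N) = N * Lh + N * j" using ij(3) by (simp add: algebra_simps diff_mult_distrib2)
      moreover have "m * i \<le> m * Lh" "N * j \<le> N * Lh" using ij by simp_all
      ultimately show ?thesis by linarith
    qed
    also have "\<dots> = Lh * Lh" by (simp add: Lh_def algebra_simps)
    finally show ?thesis .
  qed
  have card: "card {..Lh * Lh} < card I"
  proof -
    have "card I = (Lh + 1) * (Lh + 1)" by (simp add: I_def card_cartesian_product)
    then show ?thesis using L0 by (simp add: algebra_simps)
  qed
  obtain C where C: "\<forall>ij\<in>I. C ij \<in> k" "\<exists>ij\<in>I. C ij \<noteq> 0"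
      "\<forall>t\<in>{..Lh * Lh}. (\<Sum>ij\<in>I. C ij * coeff (Pij ij) t) = 0"
  proof -
    have "\<exists>C. (\<forall>ij\<in>I. C ij \<in> k) \<and> (\<exists>ij\<in>I. C ij \<noteq> 0) \<and>
      (\<forall>t\<in>{..Lh * Lh}. (\<Sum>ij\<in>I. C ij * coeff (Pij ij) t) = 0)"
    proof (rule LA[OF ksf])
      show "finite {..Lh * Lh}" by simp
      show "finite I" by (simp add: I_def)
      show "card {..Lh * Lh} < card I" by (rule card)
      fix ij t show "coeff (Pij ij) t \<in> k" by (rule cpolyD[OF Pk])
    qed
    then show ?thesis using that by blast
  qed
  have pP: "poly (Pij ij) \<theta>' = \<theta>' ^ (N * Lh) * (f ^ fst ij * g ^ snd ij)" if hI: "ij \<in> I" for ij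
  proof -
    obtain i j where ij: "ij = (i, j)" "j \<le> Lh" using hI unfolding I_def by (cases ij) auto
    have "poly (Pij ij) \<theta>' = \<theta>' ^ (m * i) * \<theta>' ^ (N * (Lh - j)) * (\<theta>' ^ N * g) ^ j"
      by (simp add: Pij_def ij(1) poly_monom pG power_add)
    also have "\<dots> = (\<theta>' ^ m) ^ i * (\<theta>' ^ (N * (Lh - j)) * \<theta>' ^ (N * j)) * g ^ j"
    proof -
      have pc: "(\<theta>' ^ i) ^ m = (\<theta>' ^ m) ^ i" by (metis power_mult mult.commute)
      show ?thesis by (simp only: power_mult power_mult_distrib mult_ac pc)
    qed
    also have "(\<theta>' ^ m) ^ i = f ^ i" using th'(3) by simp
    also have "\<theta>' ^ (N * (Lh - j)) * \<theta>' ^ (N * j) = \<theta>' ^ (N * Lh)"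
      using ij(2) by (simp add: power_add[symmetric] diff_mult_distrib2[symmetric] add_mult_distrib2[symmetric])
    finally show ?thesis using ij by simp
  qed
  have "\<theta>' ^ (N * Lh) * (\<Sum>ij\<in>I. C ij * (f ^ fst ij * g ^ snd ij)) = (\<Sum>ij\<in>I. C ij * poly (Pij ij) \<theta>')"
    by (simp add: pP sum_distrib_left mult_ac)
  also have "\<dots> = (\<Sum>ij\<in>I. \<Sum>t\<le>Lh * Lh. C ij * coeff (Pij ij) t * \<theta>' ^ t)"
    by (rule sum.cong) (simp_all add: poly_N[OF dP] sum_distrib_left mult_ac)
  also have "\<dots> = (\<Sum>t\<le>Lh * Lh. (\<Sum>ij\<in>I. C ij * coeff (Pij ij) t) * \<theta>' ^ t)"
    by (subst sum.swap) (simp add: sum_distrib_right)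
  also have "\<dots> = 0" using C(3) by simp
  finally have S0: "(\<Sum>ij\<in>I. C ij * (f ^ fst ij * g ^ snd ij)) = 0" using th'(1) by simp
  have "(\<Sum>i\<le>Lh. \<Sum>j\<le>Lh. C (i, j) * f ^ i * g ^ j) = (\<Sum>ij\<in>I. C ij * (f ^ fst ij * g ^ snd ij))"
    unfolding I_def by (simp add: sum.cartesian_product mult_ac case_prod_beta)
  then show ?thesis unfolding alg_dependent2_def using C(1,2) S0
    by (intro exI[of _ Lh] exI[of _ "\<lambda>i j. C (i, j)"]) (auto simp: I_def)
qed

lemma dep_ann: assumes "alg_dependent2 k f g" shows "\<exists>P. ann P g"
proof -
  obtain N c where c: "\<forall>i\<le>N. \<forall>j\<le>N. c i j \<in> k" "\<exists>i\<le>N. \<exists>j\<le>N. c i j \<noteq> 0"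
      "(\<Sum>i\<le>N. \<Sum>j\<le>N. c i j * f ^ i * g ^ j) = 0"
    using assms unfolding alg_dependent2_def by blast
  define P where "P = (\<Sum>j\<le>N. monom (\<Sum>i\<le>N. monom (c i j) i) j)"
  have cP: "coeff P j = (if j \<le> N then (\<Sum>i\<le>N. monom (c i j) i) else 0)" for j
    unfolding P_def by (rule coeff_sum_monom)
  have ccP: "coeff (coeff P j) i = (if j \<le> N \<and> i \<le> N then c i j else 0)" for i j
    by (simp add: cP coeff_sum_monom)
  have "P \<in> cpoly (cpoly k)" using c(1) sub_ringD(1)[OF kR]
    by (intro cpolyI[of P] cpolyI) (auto simp: ccP)
  moreover have "P \<noteq> 0" using c(2) ccP by (metis coeff_0)
  moreover have "ev2 P f g = 0"
  proof -
    have "ev2 P f g = (\<Sum>j\<le>N. \<Sum>i\<le>N. c i j * f ^ i * g ^ j)"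
      by (simp add: P_def ev2_sum poly_sum poly_monom sum_distrib_right)
    also have "\<dots> = 0" using c(3) by (subst sum.swap) simp
    finally show ?thesis .
  qed
  ultimately show ?thesis unfolding ann_def by blast
qed

end

theorem theorem12:
  fixes K k :: "'a :: {alg_closed_field, field_char_0} set"
    and D :: "'a \<Rightarrow> 'a"
    and f g a :: 'a
  assumes K: "differential_field K D"
    and k: "differential_subfield k K D"
    and k_closed: "alg_closed_subfield k"
    and same_consts: "constants K D = constants k D"
    and f: "f \<in> K" "f \<noteq> 0" "f \<notin> k"
    and a: "a \<in> k" "D f = a * f"
    and g: "g \<in> K" "satisfies_nonzero_hlde k D g"
  shows "alg_dependent2 k f g \<longleftrightarrow>
     (\<exists>\<theta> (n::int). algebraic_over K \<theta> \<and> \<theta> \<noteq> 0 \<and>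
        f = \<theta> powi n \<and> in_laurent k \<theta> g)"
proof -
  interpret base K k D f a using assms by unfold_locales auto
  show ?thesis
  proof
    assume dep: "alg_dependent2 k f g"
    obtain P where "ann P g" using dep_ann[OF dep] by blast
    then obtain Q where Q: "ann Q g" "\<forall>P. ann P g \<longrightarrow> degree Q \<le> degree P" using min_ann by blast
    interpret gloc K k D f a g Q using g(1) Q by unfold_locales auto
    obtain n c where c: "\<forall>i\<le>n. c i \<in> k" "\<exists>i\<le>n. c i \<noteq> 0" "(\<Sum>i\<le>n. c i * (D ^^ i) g) = 0"
      using g(2) unfolding satisfies_nonzero_hlde_def by blast
    define S where "S = {i. i \<le> n \<and> c i \<noteq> 0}"
    define m where "m = Max S"
    have fS: "finite S" "S \<noteq> {}" using c(2) by (auto simp: S_def)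
    have mS: "m \<in> S" unfolding m_def using Max_in[OF fS] .
    have mn: "m \<le> n" "c m \<noteq> 0" using mS by (auto simp: S_def)
    have cz: "c i = 0" if "m < i" "i \<le> n" for i
    proof (rule ccontr)
      assume "c i \<noteq> 0"
      then have "i \<in> S" using that by (simp add: S_def)
      then have "i \<le> m" unfolding m_def using Max_ge[OF fS(1)] by blast
      then show False using that by simp
    qed
    have "(\<Sum>i\<le>n. c i * (D ^^ i) g) = (\<Sum>i\<le>m. c i * (D ^^ i) g) + (\<Sum>i\<in>{m<..n}. c i * (D ^^ i) g)"
      using mn(1) by (subst sum.union_disjoint[symmetric]) (auto intro!: sum.cong simp: ivl_disj_un)
    also have "(\<Sum>i\<in>{m<..n}. c i * (D ^^ i) g) = 0" using cz by (auto intro!: sum.neutral)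
    finally have "(\<Sum>i\<le>m. c i * (D ^^ i) g) = 0" using c(3) by simp
    moreover have "\<forall>i\<le>m. c i \<in> k" using c(1) mn(1) by auto
    ultimately show "\<exists>\<theta> (n::int). algebraic_over K \<theta> \<and> \<theta> \<noteq> 0 \<and> f = \<theta> powi n \<and> in_laurent k \<theta> g"
      using forward mn(2) by blast
  next
    assume "\<exists>\<theta> (n::int). algebraic_over K \<theta> \<and> \<theta> \<noteq> 0 \<and> f = \<theta> powi n \<and> in_laurent k \<theta> g"
    then obtain \<theta> n where "\<theta> \<noteq> 0" "f = \<theta> powi n" "in_laurent k \<theta> g" by blast
    then show "alg_dependent2 k f g" by (rule backward)
  qed
qed

end
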